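(* Let $c=(c_1,c_2)$ be a differentiable map defined for $x\in\mathbb{R}$, $y>0$ (at least near the line $x=1/2$) such that $c(\tfrac12,y)=a(\tfrac12,y)$ for all $y$, $c_1(x,y)+x\,c_2(x,y)=\tfrac12$ for all $(x,y)$, and $\partial_xc_2(\tfrac12,y)=0$ for all $y$. Then for every fixed $\alpha>0$ the functions $(x,y)\mapsto\theta_{(x,y)}(c(x,y);\alpha)$ and $(x,y)\mapsto\widehat\theta_{(x,y)}(c(x,y);\alpha)$ have vanishing gradient at $(x,y)=(1/2,\sqrt3/2)$.
   Context: For $y>0$, $c=(c_1,c_2)\in\mathbb{R}^2$, $\alpha>0$: $\theta_{(x,y)}(c;\alpha)=\sum_{k,l\in\mathbb{Z}}\exp(-\tfrac{\pi\alpha}{y}((k+c_1)^2+2x(k+c_1)(l+c_2)+(x^2+y^2)(l+c_2)^2))$ and $\widehat\theta_{(x,y)}(c;\alpha)=\sum_{k,l\in\mathbb{Z}}\exp(-\tfrac{\pi\alpha}{y}(k^2+2xkl+(x^2+y^2)l^2))e^{2\pi i(kc_2-lc_1)}$. The circumcenter point $a(x,y)=(a_1,a_2)$ is $a_1=\frac{(1-x)(x^2+y^2)}{2y^2}$, $a_2=\frac{x^2+y^2-x}{2y^2}$. *)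

theory Defs
  imports "HOL-Analysis.Analysis"
begin

definition theta :: "real \<times> real \<Rightarrow> real \<times> real \<Rightarrow> real \<Rightarrow> real" where
  "theta z c \<alpha> = (case z of (x, y) \<Rightarrow> case c of (c1, c2) \<Rightarrow>
     (\<Sum>\<^sub>\<infinity>(k, l) \<in> (UNIV :: (int \<times> int) set).
        exp (- (pi * \<alpha> / y) * ((of_int k + c1)\<^sup>2 + 2 * x * (of_int k + c1) * (of_int l + c2)
                                 + (x\<^sup>2 + y\<^sup>2) * (of_int l + c2)\<^sup>2))))"

definition theta_hat :: "real \<times> real \<Rightarrow> real \<times> real \<Rightarrow> real \<Rightarrow> complex" where
  "theta_hat z c \<alpha> = (case z of (x, y) \<Rightarrow> case c of (c1, c2) \<Rightarrow>
     (\<Sum>\<^sub>\<infinity>(k, l) \<in> (UNIV :: (int \<times> int) set).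
        complex_of_real (exp (- (pi * \<alpha> / y) * ((of_int k)\<^sup>2 + 2 * x * of_int k * of_int l
                                 + (x\<^sup>2 + y\<^sup>2) * (of_int l)\<^sup>2)))
        * cis (2 * pi * (of_int k * c2 - of_int l * c1))))"

definition circ_a :: "real \<times> real \<Rightarrow> real \<times> real" where
  "circ_a z = (case z of (x, y) \<Rightarrow>
     ((1 - x) * (x\<^sup>2 + y\<^sup>2) / (2 * y\<^sup>2), (x\<^sup>2 + y\<^sup>2 - x) / (2 * y\<^sup>2)))"

end

theory Submission
  imports Defs
begin
lemma comp_le_norm:
  fixes h :: "(real \<times> real) \<times> (real \<times> real)"
  shows "\<bar>fst (fst h)\<bar> \<le> norm h" "\<bar>snd (fst h)\<bar> \<le> norm h" "\<bar>fst (snd h)\<bar> \<le> norm h" "\<bar>snd (snd h)\<bar> \<le> norm h"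
proof -
  obtain a b d1 d2 where h: "h = ((a, b), (d1, d2))" by (metis prod.collapse)
  have 1: "norm (a, b) \<le> norm h" "norm (d1, d2) \<le> norm h"
    unfolding h by (rule norm_fst_le, rule norm_snd_le)
  show "\<bar>fst (fst h)\<bar> \<le> norm h" using order_trans[OF norm_fst_le 1(1)] by (simp add: h)
  show "\<bar>snd (fst h)\<bar> \<le> norm h" using order_trans[OF norm_snd_le 1(1)] by (simp add: h)
  show "\<bar>fst (snd h)\<bar> \<le> norm h" using order_trans[OF norm_fst_le 1(2)] by (simp add: h)
  show "\<bar>snd (snd h)\<bar> \<le> norm h" using order_trans[OF norm_snd_le 1(2)] by (simp add: h)
qed

lemma sqrt3_bounds: "17/10 < sqrt 3" "sqrt 3 < 18/10"
proof -
  show "17/10 < sqrt 3" by (rule real_less_rsqrt) (simp add: power2_eq_square)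
  have "sqrt 3 < sqrt ((18/10)\<^sup>2)" by (subst real_sqrt_less_iff) (simp add: power2_eq_square)
  then show "sqrt 3 < 18/10" by simp
qed

definition p0 :: "(real \<times> real) \<times> (real \<times> real)" where
  "p0 = ((1/2, sqrt 3 / 2), (1/3, 1/3))"

lemma region:
  assumes "p \<in> ball p0 (1/10)"
  shows "0 \<le> fst (fst p)" "fst (fst p) \<le> 1" "1/2 \<le> snd (fst p)" "snd (fst p) \<le> 1"
    "\<bar>fst (snd p)\<bar> \<le> 1" "\<bar>snd (snd p)\<bar> \<le> 1"
proof -
  have d: "dist p0 p < 1/10" using assms by simp
  have "\<bar>fst (fst p0) - fst (fst p)\<bar> \<le> dist p0 p"
    using order_trans[OF dist_fst_le[of "fst p0" "fst p"] dist_fst_le[of p0 p]] by (simp add: dist_real_def)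
  then have 1: "\<bar>1/2 - fst (fst p)\<bar> < 1/10" using d by (simp add: p0_def)
  have "\<bar>snd (fst p0) - snd (fst p)\<bar> \<le> dist p0 p"
    using order_trans[OF dist_snd_le[of "fst p0" "fst p"] dist_fst_le[of p0 p]] by (simp add: dist_real_def)
  then have 2: "\<bar>sqrt 3 / 2 - snd (fst p)\<bar> < 1/10" using d by (simp add: p0_def)
  have "\<bar>fst (snd p0) - fst (snd p)\<bar> \<le> dist p0 p"
    using order_trans[OF dist_fst_le[of "snd p0" "snd p"] dist_snd_le[of p0 p]] by (simp add: dist_real_def)
  then have 3: "\<bar>1/3 - fst (snd p)\<bar> < 1/10" using d by (simp add: p0_def)
  have "\<bar>snd (snd p0) - snd (snd p)\<bar> \<le> dist p0 p"
    using order_trans[OF dist_snd_le[of "snd p0" "snd p"] dist_snd_le[of p0 p]] by (simp add: dist_real_def)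
  then have 4: "\<bar>1/3 - snd (snd p)\<bar> < 1/10" using d by (simp add: p0_def)
  show "0 \<le> fst (fst p)" "fst (fst p) \<le> 1" using 1 by linarith+
  show "1/2 \<le> snd (fst p)" "snd (fst p) \<le> 1" using 2 sqrt3_bounds by linarith+
  show "\<bar>fst (snd p)\<bar> \<le> 1" "\<bar>snd (snd p)\<bar> \<le> 1" using 3 4 by linarith+
qed

lemma quad_lower:
  fixes x y u v :: real
  assumes "0 \<le> x" "x \<le> 1" "0 < y" "y \<le> 1"
  shows "y\<^sup>2 / 4 * (u\<^sup>2 + v\<^sup>2) \<le> (u + x * v)\<^sup>2 + y\<^sup>2 * v\<^sup>2"
proof -
  have e: "2 * (u + x * v)\<^sup>2 + 2 * (x * v)\<^sup>2 - u\<^sup>2 = (u + 2 * x * v)\<^sup>2"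
    by (simp add: algebra_simps power2_eq_square)
  have h1: "u\<^sup>2 \<le> 2 * (u + x * v)\<^sup>2 + 2 * (x * v)\<^sup>2"
    using e zero_le_power2[of "u + 2 * x * v"] by linarith
  have x2: "x\<^sup>2 \<le> 1" using assms by (simp add: power_le_one)
  have h2: "(x * v)\<^sup>2 \<le> v\<^sup>2"
    using mult_right_mono[OF x2 zero_le_power2[of v]] by (simp add: power_mult_distrib)
  have y2: "y\<^sup>2 \<le> 1" using assms by (simp add: power_le_one)
  have h3: "y\<^sup>2 * u\<^sup>2 \<le> y\<^sup>2 * (2 * (u + x * v)\<^sup>2 + 2 * v\<^sup>2)"
    by (rule mult_left_mono) (use h1 h2 in auto)
  have h4: "y\<^sup>2 * (u + x * v)\<^sup>2 \<le> (u + x * v)\<^sup>2"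
    using mult_right_mono[OF y2 zero_le_power2[of "u + x * v"]] by simp
  have h5: "0 \<le> y\<^sup>2 * v\<^sup>2" by simp
  have h6: "0 \<le> (u + x * v)\<^sup>2" by simp
  have h3': "y\<^sup>2 * u\<^sup>2 \<le> 2 * (y\<^sup>2 * (u + x * v)\<^sup>2) + 2 * (y\<^sup>2 * v\<^sup>2)"
    using h3 by (simp add: distrib_left)
  have g: "y\<^sup>2 / 4 * (u\<^sup>2 + v\<^sup>2) = (y\<^sup>2 * u\<^sup>2) / 4 + (y\<^sup>2 * v\<^sup>2) / 4"
    by (simp add: algebra_simps)
  show ?thesis unfolding g using h3' h4 h5 h6 by linarith
qed

lemma sq_shift:
  fixes k c :: real assumes "\<bar>c\<bar> \<le> 1"
  shows "k\<^sup>2 \<le> 2 * (k + c)\<^sup>2 + 2" "(k + c)\<^sup>2 \<le> 2 * k\<^sup>2 + 2"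
proof -
  have "\<bar>c\<bar>\<^sup>2 \<le> 1\<^sup>2" by (rule power_mono) (use assms in auto)
  then have c2: "c\<^sup>2 \<le> 1" by simp
  have e1: "2 * (k + c)\<^sup>2 + 2 * c\<^sup>2 - k\<^sup>2 = (k + 2 * c)\<^sup>2"
    by (simp add: algebra_simps power2_eq_square)
  show "k\<^sup>2 \<le> 2 * (k + c)\<^sup>2 + 2" using e1 c2 zero_le_power2[of "k + 2 * c"] by linarith
  have e2: "2 * k\<^sup>2 + 2 * c\<^sup>2 - (k + c)\<^sup>2 = (k - c)\<^sup>2"
    by (simp add: algebra_simps power2_eq_square)
  show "(k + c)\<^sup>2 \<le> 2 * k\<^sup>2 + 2" using e2 c2 zero_le_power2[of "k - c"] by linarith
qed

lemma lin4_bound: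
  fixes a b d1 d2 Ca Cb C1 C2 H :: real
  assumes "\<bar>a\<bar> \<le> H" "\<bar>b\<bar> \<le> H" "\<bar>d1\<bar> \<le> H" "\<bar>d2\<bar> \<le> H"
  shows "\<bar>a * Ca + b * Cb + d1 * C1 + d2 * C2\<bar> \<le> H * (\<bar>Ca\<bar> + \<bar>Cb\<bar> + \<bar>C1\<bar> + \<bar>C2\<bar>)"
proof -
  have 1: "\<bar>a * Ca\<bar> \<le> H * \<bar>Ca\<bar>" unfolding abs_mult by (rule mult_right_mono) (use assms in auto)
  have 2: "\<bar>b * Cb\<bar> \<le> H * \<bar>Cb\<bar>" unfolding abs_mult by (rule mult_right_mono) (use assms in auto)
  have 3: "\<bar>d1 * C1\<bar> \<le> H * \<bar>C1\<bar>" unfolding abs_mult by (rule mult_right_mono) (use assms in auto)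
  have 4: "\<bar>d2 * C2\<bar> \<le> H * \<bar>C2\<bar>" unfolding abs_mult by (rule mult_right_mono) (use assms in auto)
  have "\<bar>a * Ca + b * Cb + d1 * C1 + d2 * C2\<bar> \<le> \<bar>a * Ca\<bar> + \<bar>b * Cb\<bar> + \<bar>d1 * C1\<bar> + \<bar>d2 * C2\<bar>"
    by (smt (verit) abs_triangle_ineq)
  then show ?thesis using 1 2 3 4 by (simp add: algebra_simps)
qed

lemma abs_le_sq: "\<bar>u::real\<bar> \<le> 1 + u\<^sup>2"
proof -
  have "0 \<le> (\<bar>u\<bar> - 1)\<^sup>2" by simp
  then have "2 * \<bar>u\<bar> \<le> 1 + u\<^sup>2" by (simp add: power2_eq_square algebra_simps)
  then show ?thesis by simp
qed

lemma abs_prod_le: "2 * (\<bar>u::real\<bar> * \<bar>v\<bar>) \<le> u\<^sup>2 + v\<^sup>2"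
proof -
  have "0 \<le> (\<bar>u\<bar> - \<bar>v\<bar>)\<^sup>2" by simp
  then show ?thesis by (simp add: power2_eq_square algebra_simps)
qed

lemma aux_sum:
  fixes A B C D P U V U1 V1 :: real
  assumes "A \<le> 2 * P + 2 * V" "B \<le> 2 * V" "C \<le> 2 * U1 + 2 * V1" "D \<le> 2 * U1 + 4 * V1"
    "U1 \<le> 1 + U" "V1 \<le> 1 + V" "2 * P \<le> U + V" "0 \<le> V" "0 \<le> U"
  shows "A + B + C + D \<le> 11 * (1 + U + V)"
proof -
  have "A + B + C + D \<le> 11 + 11 * U + 11 * V" using assms by linarith
  then show ?thesis by (simp add: algebra_simps)
qed

lemma aux_P:
  fixes L U X Y P V :: real
  assumes "L \<le> U + X + Y" "X \<le> 2 * P" "Y \<le> 2 * V" "2 * P \<le> U + V" "0 \<le> U"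
  shows "L \<le> 3 * (U + V)"
proof -
  have "L \<le> 3 * U + 3 * V" using assms by linarith
  then show ?thesis by (simp add: algebra_simps)
qed

lemma DP_bound:
  fixes x y u v a b d1 d2 H :: real
  assumes x: "0 \<le> x" "x \<le> 1" and y: "1/2 \<le> y" "y \<le> 1"
    and h: "\<bar>a\<bar> \<le> H" "\<bar>b\<bar> \<le> H" "\<bar>d1\<bar> \<le> H" "\<bar>d2\<bar> \<le> H"
  shows "\<bar>2 * u * d1 + 2 * (a * u * v + x * d1 * v + x * u * d2) + (2 * x * a + 2 * y * b) * v\<^sup>2 + (x\<^sup>2+y\<^sup>2) * (2 * v * d2)\<bar> \<le> 11 * (1+u\<^sup>2+v\<^sup>2) * H"
proof -
  have H: "0 \<le> H" using h(1) by linarith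
  have eq: "2 * u * d1 + 2 * (a * u * v + x * d1 * v + x * u * d2) + (2 * x * a + 2 * y * b) * v\<^sup>2 + (x\<^sup>2+y\<^sup>2) * (2 * v * d2)
     = a * (2 * u * v + 2 * x * v\<^sup>2) + b * (2 * y * v\<^sup>2) + d1 * (2 * u + 2 * x * v) + d2 * (2 * x * u + 2 * (x\<^sup>2+y\<^sup>2) * v)"
    by (simp add: algebra_simps)
  have v2: "0 \<le> v\<^sup>2" by simp
  have xv: "\<bar>x * v\<^sup>2\<bar> \<le> v\<^sup>2" using x by (simp add: abs_mult mult_left_le_one_le)
  have yv: "\<bar>y * v\<^sup>2\<bar> \<le> v\<^sup>2" using y by (simp add: abs_mult mult_left_le_one_le)
  have xv1: "\<bar>x * v\<bar> \<le> \<bar>v\<bar>" using x by (simp add: abs_mult mult_left_le_one_le)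
  have xu1: "\<bar>x * u\<bar> \<le> \<bar>u\<bar>" using x by (simp add: abs_mult mult_left_le_one_le)
  have x2: "x\<^sup>2 \<le> 1" using x by (simp add: power_le_one)
  have y2: "y\<^sup>2 \<le> 1" using y by (simp add: power_le_one)
  have xyv: "\<bar>(x\<^sup>2+y\<^sup>2) * v\<bar> \<le> 2 * \<bar>v\<bar>"
  proof -
    have "\<bar>(x\<^sup>2+y\<^sup>2) * v\<bar> = (x\<^sup>2+y\<^sup>2) * \<bar>v\<bar>" by (simp add: abs_mult)
    also have "\<dots> \<le> 2 * \<bar>v\<bar>" by (rule mult_right_mono) (use x2 y2 in auto)
    finally show ?thesis .
  qed
  have Ca: "\<bar>2 * u * v + 2 * x * v\<^sup>2\<bar> \<le> 2 * (\<bar>u\<bar> * \<bar>v\<bar>) + 2 * v\<^sup>2"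
    using abs_triangle_ineq[of "2 * u * v" "2 * x * v\<^sup>2"] xv by (simp add: abs_mult)
  have Cb: "\<bar>2 * y * v\<^sup>2\<bar> \<le> 2 * v\<^sup>2" using yv by (simp add: abs_mult)
  have C1: "\<bar>2 * u + 2 * x * v\<bar> \<le> 2 * \<bar>u\<bar> + 2 * \<bar>v\<bar>"
    using abs_triangle_ineq[of "2 * u" "2 * x * v"] xv1 by (simp add: abs_mult)
  have C2: "\<bar>2 * x * u + 2 * (x\<^sup>2+y\<^sup>2) * v\<bar> \<le> 2 * \<bar>u\<bar> + 4 * \<bar>v\<bar>"
  proof -
    have t: "\<bar>2 * x * u + 2 * (x\<^sup>2+y\<^sup>2) * v\<bar> \<le> \<bar>2 * x * u\<bar> + \<bar>2 * (x\<^sup>2+y\<^sup>2) * v\<bar>" by (rule abs_triangle_ineq)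
    have t1: "\<bar>2 * x * u\<bar> = 2 * \<bar>x * u\<bar>" by (simp add: abs_mult)
    have t2: "\<bar>2 * (x\<^sup>2+y\<^sup>2) * v\<bar> = 2 * \<bar>(x\<^sup>2+y\<^sup>2) * v\<bar>" by (simp add: abs_mult)
    show ?thesis using t t1 t2 xu1 xyv by linarith
  qed
  have sum: "\<bar>2 * u * v + 2 * x * v\<^sup>2\<bar> + \<bar>2 * y * v\<^sup>2\<bar> + \<bar>2 * u + 2 * x * v\<bar> + \<bar>2 * x * u + 2 * (x\<^sup>2+y\<^sup>2) * v\<bar> \<le> 11 * (1+u\<^sup>2+v\<^sup>2)"
    by (rule aux_sum[OF Ca Cb C1 C2 abs_le_sq[of u] abs_le_sq[of v] abs_prod_le[of u v] v2 zero_le_power2[of u]])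
  show ?thesis unfolding eq
    using order_trans[OF lin4_bound[OF h] mult_left_mono[OF sum H]] by (simp add: mult.commute)
qed

lemma P_bound:
  fixes x y u v :: real
  assumes x: "0 \<le> x" "x \<le> 1" and y: "1/2 \<le> y" "y \<le> 1"
  shows "\<bar>u\<^sup>2 + 2 * x * u * v + (x\<^sup>2+y\<^sup>2) * v\<^sup>2\<bar> \<le> 3 * (u\<^sup>2+v\<^sup>2)"
proof -
  have x2: "x\<^sup>2 \<le> 1" using x by (simp add: power_le_one)
  have y2: "y\<^sup>2 \<le> 1" using y by (simp add: power_le_one)
  have 1: "\<bar>2 * x * u * v\<bar> \<le> 2 * (\<bar>u\<bar> * \<bar>v\<bar>)"
  proof -
    have "\<bar>2 * x * u * v\<bar> = x * (2 * (\<bar>u\<bar> * \<bar>v\<bar>))" using x by (simp add: abs_mult)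
    also have "\<dots> \<le> 2 * (\<bar>u\<bar> * \<bar>v\<bar>)" by (rule mult_left_le_one_le) (use x in auto)
    finally show ?thesis .
  qed
  have 2: "\<bar>(x\<^sup>2+y\<^sup>2) * v\<^sup>2\<bar> \<le> 2 * v\<^sup>2"
  proof -
    have "\<bar>(x\<^sup>2+y\<^sup>2) * v\<^sup>2\<bar> = (x\<^sup>2+y\<^sup>2) * v\<^sup>2" by (simp add: abs_mult)
    also have "\<dots> \<le> 2 * v\<^sup>2" by (rule mult_right_mono) (use x2 y2 in auto)
    finally show ?thesis .
  qed
  have "\<bar>u\<^sup>2 + 2 * x * u * v + (x\<^sup>2+y\<^sup>2) * v\<^sup>2\<bar> \<le> u\<^sup>2 + \<bar>2 * x * u * v\<bar> + \<bar>(x\<^sup>2+y\<^sup>2) * v\<^sup>2\<bar>"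
    by (smt (verit) abs_triangle_ineq zero_le_power2)
  then show ?thesis by (rule aux_P[OF _ 1 2 abs_prod_le[of u v] zero_le_power2[of u]])
qed

lemma Dphi_bound:
  fixes y DP P b H w :: real
  assumes y: "1/2 \<le> y" "y \<le> 1" and DP: "\<bar>DP\<bar> \<le> 11 * (1+w) * H" and P: "\<bar>P\<bar> \<le> 3 * w"
    and b: "\<bar>b\<bar> \<le> H" and w: "0 \<le> w"
  shows "\<bar>DP / y - P * b / y\<^sup>2\<bar> \<le> 34 * (1+w) * H"
proof -
  have H: "0 \<le> H" using b by linarith
  have 1: "\<bar>DP / y\<bar> \<le> 22 * (1+w) * H"
  proof -
    have "\<bar>DP / y\<bar> = \<bar>DP\<bar> / y" using y by simp
    also have "\<dots> \<le> 2 * \<bar>DP\<bar>"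
    proof -
      have "\<bar>DP\<bar> * 1 \<le> \<bar>DP\<bar> * (2 * y)" by (rule mult_left_mono) (use y in auto)
      then show ?thesis using y by (simp add: pos_divide_le_eq algebra_simps)
    qed
    finally show ?thesis using DP by linarith
  qed
  have 2: "\<bar>P * b / y\<^sup>2\<bar> \<le> 12 * w * H"
  proof -
    have yy: "1/4 \<le> y\<^sup>2" using power_mono[OF y(1), of 2] by (simp add: power2_eq_square)
    have "\<bar>P * b / y\<^sup>2\<bar> = \<bar>P\<bar> * \<bar>b\<bar> / y\<^sup>2" by (simp add: abs_mult)
    also have "\<dots> \<le> 4 * (\<bar>P\<bar> * \<bar>b\<bar>)"
    proof -
      have "(\<bar>P\<bar> * \<bar>b\<bar>) * 1 \<le> (\<bar>P\<bar> * \<bar>b\<bar>) * (4 * y\<^sup>2)" by (rule mult_left_mono) (use yy in auto)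
      moreover have "0 < y\<^sup>2" using y by simp
      ultimately show ?thesis by (simp add: pos_divide_le_eq algebra_simps)
    qed
    also have "\<dots> \<le> 4 * (3 * w * H)"
    proof -
      have pb: "\<bar>P\<bar> * \<bar>b\<bar> \<le> (3 * w) * H" by (rule mult_mono[OF P b]) (use w in auto)
      then show ?thesis by linarith
    qed
    finally show ?thesis by simp
  qed
  have "\<bar>DP / y - P * b / y\<^sup>2\<bar> \<le> \<bar>DP / y\<bar> + \<bar>P * b / y\<^sup>2\<bar>" by (rule abs_triangle_ineq4)
  then show ?thesis using 1 2 H w mult_nonneg_nonneg[OF w H] by (simp add: algebra_simps)
qed

definition Pq :: "int \<times> int \<Rightarrow> (real \<times> real) \<times> (real \<times> real) \<Rightarrow> real" where
  "Pq n p = (of_int (fst n) + fst (snd p))\<^sup>2 + 2 * fst (fst p) * (of_int (fst n) + fst (snd p)) * (of_int (snd n) + snd (snd p))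
       + ((fst (fst p))\<^sup>2 + (snd (fst p))\<^sup>2) * (of_int (snd n) + snd (snd p))\<^sup>2"

definition DPq :: "int \<times> int \<Rightarrow> (real \<times> real) \<times> (real \<times> real) \<Rightarrow> (real \<times> real) \<times> (real \<times> real) \<Rightarrow> real" where
  "DPq n p h = (let x = fst (fst p); y = snd (fst p); u = of_int (fst n) + fst (snd p); v = of_int (snd n) + snd (snd p);
       a = fst (fst h); b = snd (fst h); d1 = fst (snd h); d2 = snd (snd h) in
     2 * u * d1 + 2 * (a * u * v + x * d1 * v + x * u * d2) + (2 * x * a + 2 * y * b) * v\<^sup>2 + (x\<^sup>2 + y\<^sup>2) * (2 * v * d2))"

lemma Pq_deriv: "(Pq n has_derivative DPq n p) (at p)"
  unfolding Pq_def[abs_def]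
  apply (rule has_derivative_eq_rhs)
   apply (rule derivative_eq_intros refl)+
  apply (simp add: DPq_def Let_def fun_eq_iff algebra_simps power2_eq_square)
  done

definition tht :: "real \<Rightarrow> int \<times> int \<Rightarrow> (real \<times> real) \<times> (real \<times> real) \<Rightarrow> real" where
  "tht \<alpha> n p = exp (- (pi * \<alpha> / snd (fst p)) * Pq n p)"

definition Dtht where
  "Dtht \<alpha> n p h = tht \<alpha> n p * (- (pi * \<alpha>) * (DPq n p h / snd (fst p) - Pq n p * snd (fst h) / (snd (fst p))\<^sup>2))"

lemma tht_deriv: assumes "snd (fst p) \<noteq> 0" shows "(tht \<alpha> n has_derivative Dtht \<alpha> n p) (at p)"
  unfolding tht_def[abs_def]
  apply (rule has_derivative_eq_rhs)
   apply (rule derivative_eq_intros refl Pq_deriv assms)+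
  apply (simp add: Dtht_def tht_def fun_eq_iff)
  using assms apply (simp add: field_simps power2_eq_square)
  done

lemma tht_bounds:
  assumes p: "p \<in> ball p0 (1/10)" and a: "\<alpha> > 0"
  shows "tht \<alpha> n p \<le> exp (pi * \<alpha> / 8) * exp (- (pi * \<alpha> / 32) * ((real_of_int (fst n))\<^sup>2 + (real_of_int (snd n))\<^sup>2))"
    and "\<bar>Dtht \<alpha> n p h\<bar> \<le> tht \<alpha> n p * (170 * pi * \<alpha> * (1 + ((real_of_int (fst n))\<^sup>2 + (real_of_int (snd n))\<^sup>2)) * norm h)"
proof -
  obtain x y c1 c2 where pp: "p = ((x, y), (c1, c2))" by (metis prod.collapse)
  obtain k l where nn: "n = (k, l)" by (metis prod.collapse)
  have R: "0 \<le> x" "x \<le> 1" "1/2 \<le> y" "y \<le> 1" "\<bar>c1\<bar> \<le> 1" "\<bar>c2\<bar> \<le> 1"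
    using region[OF p] by (simp_all add: pp)
  define u where "u = real_of_int k + c1"
  define v where "v = real_of_int l + c2"
  define t where "t = (real_of_int k)\<^sup>2 + (real_of_int l)\<^sup>2"
  have y0: "0 < y" using R by linarith
  have Peq: "Pq n p = u\<^sup>2 + 2 * x * u * v + (x\<^sup>2 + y\<^sup>2) * v\<^sup>2"
    by (simp add: Pq_def pp nn u_def v_def)
  have Peq2: "u\<^sup>2 + 2 * x * u * v + (x\<^sup>2 + y\<^sup>2) * v\<^sup>2 = (u + x * v)\<^sup>2 + y\<^sup>2 * v\<^sup>2"
    by (simp add: algebra_simps power2_eq_square)
  have yy: "1/4 \<le> y\<^sup>2" using power_mono[OF R(3), of 2] by (simp add: power2_eq_square)
  have ql: "y\<^sup>2 / 4 * (u\<^sup>2 + v\<^sup>2) \<le> (u + x * v)\<^sup>2 + y\<^sup>2 * v\<^sup>2"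
    by (rule quad_lower) (use R y0 in auto)
  have w0: "0 \<le> u\<^sup>2 + v\<^sup>2" by simp
  have ql2: "(u\<^sup>2 + v\<^sup>2) / 16 \<le> y\<^sup>2 / 4 * (u\<^sup>2 + v\<^sup>2)"
    using mult_right_mono[OF yy w0] by simp
  have k2: "(real_of_int k)\<^sup>2 \<le> 2 * u\<^sup>2 + 2" unfolding u_def by (rule sq_shift(1)) (use R in auto)
  have l2: "(real_of_int l)\<^sup>2 \<le> 2 * v\<^sup>2 + 2" unfolding v_def by (rule sq_shift(1)) (use R in auto)
  have u2: "u\<^sup>2 \<le> 2 * (real_of_int k)\<^sup>2 + 2" unfolding u_def by (rule sq_shift(2)) (use R in auto)
  have v2: "v\<^sup>2 \<le> 2 * (real_of_int l)\<^sup>2 + 2" unfolding v_def by (rule sq_shift(2)) (use R in auto)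
  have Plow: "(t - 4) / 32 \<le> Pq n p"
    using ql ql2 k2 l2 unfolding Peq Peq2 t_def by (simp add: field_simps)
  have P0: "0 \<le> Pq n p" unfolding Peq Peq2 by simp
  have pa: "0 < pi * \<alpha>" using a by simp
  have c1: "pi * \<alpha> \<le> pi * \<alpha> / y"
  proof -
    have "pi * \<alpha> * y \<le> pi * \<alpha>" using mult_left_le[OF R(4), of "pi * \<alpha>"] pa by simp
    then show ?thesis using y0 by (simp add: pos_le_divide_eq)
  qed
  have c2: "pi * \<alpha> * Pq n p \<le> (pi * \<alpha> / y) * Pq n p"
    by (rule mult_right_mono[OF c1 P0])
  have c3: "pi * \<alpha> * ((t - 4) / 32) \<le> pi * \<alpha> * Pq n p"
    by (rule mult_left_mono[OF Plow]) (use pa in simp)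
  have expo: "- (pi * \<alpha> / y) * Pq n p \<le> pi * \<alpha> / 8 + (- (pi * \<alpha> / 32) * t)"
  proof -
    have e: "pi * \<alpha> * ((t - 4) / 32) = (pi * \<alpha> / 32) * t - pi * \<alpha> / 8" by (simp add: field_simps)
    show ?thesis using c2 c3 e by linarith
  qed
  have tht_eq: "tht \<alpha> n p = exp (- (pi * \<alpha> / y) * Pq n p)"
    by (simp add: tht_def pp)
  show "tht \<alpha> n p \<le> exp (pi * \<alpha> / 8) * exp (- (pi * \<alpha> / 32) * ((real_of_int (fst n))\<^sup>2 + (real_of_int (snd n))\<^sup>2))"
    unfolding tht_eq exp_add[symmetric] using expo by (simp add: nn t_def)
  define H where "H = norm h"
  have hb: "\<bar>fst (fst h)\<bar> \<le> H" "\<bar>snd (fst h)\<bar> \<le> H" "\<bar>fst (snd h)\<bar> \<le> H" "\<bar>snd (snd h)\<bar> \<le> H"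
    using comp_le_norm[of h] by (simp_all add: H_def)
  have DPeq: "DPq n p h = 2 * u * fst (snd h) + 2 * (fst (fst h) * u * v + x * fst (snd h) * v + x * u * snd (snd h))
      + (2 * x * fst (fst h) + 2 * y * snd (fst h)) * v\<^sup>2 + (x\<^sup>2 + y\<^sup>2) * (2 * v * snd (snd h))"
    by (simp add: DPq_def pp nn u_def v_def Let_def)
  have DPb: "\<bar>DPq n p h\<bar> \<le> 11 * (1 + (u\<^sup>2 + v\<^sup>2)) * H"
    unfolding DPeq using DP_bound[OF R(1-4) hb, of u v] by (simp add: add.assoc)
  have Pb: "\<bar>Pq n p\<bar> \<le> 3 * (u\<^sup>2 + v\<^sup>2)"
    unfolding Peq by (rule P_bound) (use R in auto)
  have Db: "\<bar>DPq n p h / y - Pq n p * snd (fst h) / y\<^sup>2\<bar> \<le> 34 * (1 + (u\<^sup>2 + v\<^sup>2)) * H"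
    by (rule Dphi_bound[OF R(3,4) DPb Pb hb(2) w0])
  have wt: "1 + (u\<^sup>2 + v\<^sup>2) \<le> 5 * (1 + t)"
  proof -
    have "1 + (u\<^sup>2 + v\<^sup>2) \<le> 5 + 5 * (real_of_int k)\<^sup>2 + 5 * (real_of_int l)\<^sup>2"
      using u2 v2 zero_le_power2[of "real_of_int k"] zero_le_power2[of "real_of_int l"] by linarith
    then show ?thesis unfolding t_def by (simp add: algebra_simps)
  qed
  have H0: "0 \<le> H" by (simp add: H_def)
  have Db2: "\<bar>DPq n p h / y - Pq n p * snd (fst h) / y\<^sup>2\<bar> \<le> 170 * (1 + t) * H"
  proof -
    have "34 * (1 + (u\<^sup>2 + v\<^sup>2)) * H \<le> 34 * (5 * (1 + t)) * H"
      by (intro mult_right_mono mult_left_mono wt H0) auto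
    then show ?thesis using Db by (simp add: algebra_simps)
  qed
  have tpos: "0 \<le> tht \<alpha> n p" by (simp add: tht_def)
  have "\<bar>Dtht \<alpha> n p h\<bar> = tht \<alpha> n p * (pi * \<alpha> * \<bar>DPq n p h / y - Pq n p * snd (fst h) / y\<^sup>2\<bar>)"
    unfolding Dtht_def using tpos pa a by (simp add: abs_mult pp)
  also have "\<dots> \<le> tht \<alpha> n p * (pi * \<alpha> * (170 * (1 + t) * H))"
    by (intro mult_left_mono Db2 tpos) (use pa in simp)
  finally show "\<bar>Dtht \<alpha> n p h\<bar> \<le> tht \<alpha> n p * (170 * pi * \<alpha> * (1 + ((real_of_int (fst n))\<^sup>2 + (real_of_int (snd n))\<^sup>2)) * norm h)"
    by (simp add: nn t_def H_def algebra_simps)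
qed

definition Rq :: "int \<times> int \<Rightarrow> (real \<times> real) \<times> (real \<times> real) \<Rightarrow> real" where
  "Rq n p = (of_int (fst n))\<^sup>2 + 2 * fst (fst p) * of_int (fst n) * of_int (snd n)
       + ((fst (fst p))\<^sup>2 + (snd (fst p))\<^sup>2) * (of_int (snd n))\<^sup>2"

definition DRq :: "int \<times> int \<Rightarrow> (real \<times> real) \<times> (real \<times> real) \<Rightarrow> (real \<times> real) \<times> (real \<times> real) \<Rightarrow> real" where
  "DRq n p h = 2 * fst (fst h) * of_int (fst n) * of_int (snd n)
      + (2 * fst (fst p) * fst (fst h) + 2 * snd (fst p) * snd (fst h)) * (of_int (snd n))\<^sup>2"

lemma Rq_deriv: "(Rq n has_derivative DRq n p) (at p)"
  unfolding Rq_def[abs_def]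
  apply (rule has_derivative_eq_rhs)
   apply (rule derivative_eq_intros refl)+
  apply (simp add: DRq_def fun_eq_iff algebra_simps power2_eq_square)
  done

definition ER :: "real \<Rightarrow> int \<times> int \<Rightarrow> (real \<times> real) \<times> (real \<times> real) \<Rightarrow> real" where
  "ER \<alpha> n p = exp (- (pi * \<alpha> / snd (fst p)) * Rq n p)"

definition DER where
  "DER \<alpha> n p h = ER \<alpha> n p * (- (pi * \<alpha>) * (DRq n p h / snd (fst p) - Rq n p * snd (fst h) / (snd (fst p))\<^sup>2))"

lemma ER_deriv: assumes "snd (fst p) \<noteq> 0" shows "(ER \<alpha> n has_derivative DER \<alpha> n p) (at p)"
  unfolding ER_def[abs_def]
  apply (rule has_derivative_eq_rhs)
   apply (rule derivative_eq_intros refl Rq_deriv assms)+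
  apply (simp add: DER_def ER_def fun_eq_iff)
  using assms apply (simp add: field_simps power2_eq_square)
  done

definition psi :: "int \<times> int \<Rightarrow> (real \<times> real) \<times> (real \<times> real) \<Rightarrow> real" where
  "psi n p = 2 * pi * (of_int (fst n) * snd (snd p) - of_int (snd n) * fst (snd p))"

definition Dpsi :: "int \<times> int \<Rightarrow> (real \<times> real) \<times> (real \<times> real) \<Rightarrow> real" where
  "Dpsi n h = 2 * pi * (of_int (fst n) * snd (snd h) - of_int (snd n) * fst (snd h))"

lemma psi_deriv: "(psi n has_derivative Dpsi n) (at p)"
  unfolding psi_def[abs_def]
  apply (rule has_derivative_eq_rhs)
   apply (rule derivative_eq_intros refl)+
  apply (simp add: Dpsi_def fun_eq_iff algebra_simps)
  done

definition thh :: "real \<Rightarrow> int \<times> int \<Rightarrow> (real \<times> real) \<times> (real \<times> real) \<Rightarrow> complex" where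
  "thh \<alpha> n p = complex_of_real (ER \<alpha> n p) * cis (psi n p)"

definition Dthh where
  "Dthh \<alpha> n p h = complex_of_real (DER \<alpha> n p h) * cis (psi n p)
     + complex_of_real (ER \<alpha> n p) * (Dpsi n h *\<^sub>R (\<i> * cis (psi n p)))"

lemma thh_deriv: assumes "snd (fst p) \<noteq> 0" shows "(thh \<alpha> n has_derivative Dthh \<alpha> n p) (at p)"
  unfolding thh_def[abs_def]
  apply (rule has_derivative_eq_rhs)
   apply (rule derivative_eq_intros refl ER_deriv psi_deriv assms)+
  apply (simp add: Dthh_def fun_eq_iff algebra_simps)
  done

lemma exp_bound_gen:
  fixes Q t y \<alpha> :: real
  assumes Ql: "(t - 4) / 32 \<le> Q" and Q0: "0 \<le> Q" and y: "0 < y" "y \<le> 1" and a: "\<alpha> > 0"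
  shows "exp (- (pi * \<alpha> / y) * Q) \<le> exp (pi * \<alpha> / 8) * exp (- (pi * \<alpha> / 32) * t)"
proof -
  have pa: "0 < pi * \<alpha>" using a by simp
  have c1: "pi * \<alpha> \<le> pi * \<alpha> / y"
  proof -
    have "pi * \<alpha> * y \<le> pi * \<alpha>" using mult_left_le[OF y(2), of "pi * \<alpha>"] pa by simp
    then show ?thesis using y by (simp add: pos_le_divide_eq)
  qed
  have c2: "pi * \<alpha> * Q \<le> (pi * \<alpha> / y) * Q" by (rule mult_right_mono[OF c1 Q0])
  have c3: "pi * \<alpha> * ((t - 4) / 32) \<le> pi * \<alpha> * Q" by (rule mult_left_mono[OF Ql]) (use pa in simp)
  have e: "pi * \<alpha> * ((t - 4) / 32) = (pi * \<alpha> / 32) * t - pi * \<alpha> / 8" by (simp add: field_simps)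
  have expo: "- (pi * \<alpha> / y) * Q \<le> pi * \<alpha> / 8 + (- (pi * \<alpha> / 32) * t)"
    using c2 c3 e by linarith
  show ?thesis unfolding exp_add[symmetric] using expo by simp
qed

lemma thh_bounds:
  assumes p: "p \<in> ball p0 (1/10)" and a: "\<alpha> > 0"
  shows "norm (thh \<alpha> n p) \<le> exp (pi * \<alpha> / 8) * exp (- (pi * \<alpha> / 32) * ((real_of_int (fst n))\<^sup>2 + (real_of_int (snd n))\<^sup>2))"
    and "norm (Dthh \<alpha> n p h) \<le> exp (pi * \<alpha> / 8) * exp (- (pi * \<alpha> / 32) * ((real_of_int (fst n))\<^sup>2 + (real_of_int (snd n))\<^sup>2))
           * ((34 * pi * \<alpha> + 4 * pi) * (1 + ((real_of_int (fst n))\<^sup>2 + (real_of_int (snd n))\<^sup>2)) * norm h)"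
proof -
  obtain x y c1 c2 where pp: "p = ((x, y), (c1, c2))" by (metis prod.collapse)
  obtain k l where nn: "n = (k, l)" by (metis prod.collapse)
  have R: "0 \<le> x" "x \<le> 1" "1/2 \<le> y" "y \<le> 1" "\<bar>c1\<bar> \<le> 1" "\<bar>c2\<bar> \<le> 1"
    using region[OF p] by (simp_all add: pp)
  define u where "u = real_of_int k"
  define v where "v = real_of_int l"
  define t where "t = u\<^sup>2 + v\<^sup>2"
  have y0: "0 < y" using R by linarith
  have Req: "Rq n p = u\<^sup>2 + 2 * x * u * v + (x\<^sup>2 + y\<^sup>2) * v\<^sup>2"
    by (simp add: Rq_def pp nn u_def v_def)
  have Peq2: "u\<^sup>2 + 2 * x * u * v + (x\<^sup>2 + y\<^sup>2) * v\<^sup>2 = (u + x * v)\<^sup>2 + y\<^sup>2 * v\<^sup>2"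
    by (simp add: algebra_simps power2_eq_square)
  have yy: "1/4 \<le> y\<^sup>2" using power_mono[OF R(3), of 2] by (simp add: power2_eq_square)
  have ql: "y\<^sup>2 / 4 * (u\<^sup>2 + v\<^sup>2) \<le> (u + x * v)\<^sup>2 + y\<^sup>2 * v\<^sup>2"
    by (rule quad_lower) (use R y0 in auto)
  have w0: "0 \<le> u\<^sup>2 + v\<^sup>2" by simp
  have ql2: "(u\<^sup>2 + v\<^sup>2) / 16 \<le> y\<^sup>2 / 4 * (u\<^sup>2 + v\<^sup>2)"
    using mult_right_mono[OF yy w0] by simp
  have Rlow: "(t - 4) / 32 \<le> Rq n p"
  proof -
    have z1: "(u\<^sup>2 + v\<^sup>2) / 16 \<le> (u + x * v)\<^sup>2 + y\<^sup>2 * v\<^sup>2" by (rule order_trans[OF ql2 ql])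
    have z2: "(t - 4) / 32 \<le> (u\<^sup>2 + v\<^sup>2) / 16" using w0 unfolding t_def by (simp add: field_simps)
    show ?thesis unfolding Req Peq2 by (rule order_trans[OF z2 z1])
  qed
  have R0: "0 \<le> Rq n p" unfolding Req Peq2 by simp
  have ERb: "ER \<alpha> n p \<le> exp (pi * \<alpha> / 8) * exp (- (pi * \<alpha> / 32) * t)"
    unfolding ER_def using exp_bound_gen[OF Rlow R0 y0 R(4) a] by (simp add: pp)
  have ERpos: "0 \<le> ER \<alpha> n p" by (simp add: ER_def)
  have tdef: "t = (real_of_int (fst n))\<^sup>2 + (real_of_int (snd n))\<^sup>2" by (simp add: t_def u_def v_def nn)
  have nthh: "norm (thh \<alpha> n p) = ER \<alpha> n p" using ERpos by (simp add: thh_def norm_mult)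
  show "norm (thh \<alpha> n p) \<le> exp (pi * \<alpha> / 8) * exp (- (pi * \<alpha> / 32) * ((real_of_int (fst n))\<^sup>2 + (real_of_int (snd n))\<^sup>2))"
    using ERb nthh tdef by simp
  define H where "H = norm h"
  have H0: "0 \<le> H" by (simp add: H_def)
  have hb: "\<bar>fst (fst h)\<bar> \<le> H" "\<bar>snd (fst h)\<bar> \<le> H" "\<bar>fst (snd h)\<bar> \<le> H" "\<bar>snd (snd h)\<bar> \<le> H"
    using comp_le_norm[of h] by (simp_all add: H_def)
  have z: "\<bar>0::real\<bar> \<le> H" using H0 by simp
  have DReq: "DRq n p h = 2 * u * 0 + 2 * (fst (fst h) * u * v + x * 0 * v + x * u * 0)
      + (2 * x * fst (fst h) + 2 * y * snd (fst h)) * v\<^sup>2 + (x\<^sup>2 + y\<^sup>2) * (2 * v * 0)"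
    by (simp add: DRq_def pp nn u_def v_def)
  have DRb: "\<bar>DRq n p h\<bar> \<le> 11 * (1 + (u\<^sup>2 + v\<^sup>2)) * H"
    unfolding DReq using DP_bound[OF R(1-4) hb(1,2) z z, of u v] by (simp add: add.assoc)
  have Pb: "\<bar>Rq n p\<bar> \<le> 3 * (u\<^sup>2 + v\<^sup>2)"
    unfolding Req by (rule P_bound) (use R in auto)
  have Db: "\<bar>DRq n p h / y - Rq n p * snd (fst h) / y\<^sup>2\<bar> \<le> 34 * (1 + (u\<^sup>2 + v\<^sup>2)) * H"
    by (rule Dphi_bound[OF R(3,4) DRb Pb hb(2) w0])
  have pa: "0 < pi * \<alpha>" using a by simp
  have DERb: "\<bar>DER \<alpha> n p h\<bar> \<le> ER \<alpha> n p * (pi * \<alpha> * (34 * (1 + t) * H))"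
  proof -
    have "\<bar>DER \<alpha> n p h\<bar> = ER \<alpha> n p * (pi * \<alpha> * \<bar>DRq n p h / y - Rq n p * snd (fst h) / y\<^sup>2\<bar>)"
      unfolding DER_def using ERpos pa a by (simp add: abs_mult pp)
    also have "\<dots> \<le> ER \<alpha> n p * (pi * \<alpha> * (34 * (1 + t) * H))"
      by (intro mult_left_mono ERpos) (use pa Db t_def in auto)
    finally show ?thesis .
  qed
  have Dpsib: "\<bar>Dpsi n h\<bar> \<le> 4 * pi * (1 + t) * H"
  proof -
    have "\<bar>u * snd (snd h) - v * fst (snd h)\<bar> \<le> \<bar>u\<bar> * H + \<bar>v\<bar> * H"
    proof -
      have "\<bar>u * snd (snd h) - v * fst (snd h)\<bar> \<le> \<bar>u * snd (snd h)\<bar> + \<bar>v * fst (snd h)\<bar>" by (rule abs_triangle_ineq4)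
      moreover have "\<bar>u * snd (snd h)\<bar> \<le> \<bar>u\<bar> * H" unfolding abs_mult by (rule mult_left_mono[OF hb(4)]) simp
      moreover have "\<bar>v * fst (snd h)\<bar> \<le> \<bar>v\<bar> * H" unfolding abs_mult by (rule mult_left_mono[OF hb(3)]) simp
      ultimately show ?thesis by linarith
    qed
    moreover have "\<bar>u\<bar> * H + \<bar>v\<bar> * H \<le> 2 * (1 + t) * H"
    proof -
      have "\<bar>u\<bar> + \<bar>v\<bar> \<le> 2 * (1 + t)"
      proof -
        have "\<bar>u\<bar> + \<bar>v\<bar> \<le> 2 + 2 * u\<^sup>2 + 2 * v\<^sup>2"
          using abs_le_sq[of u] abs_le_sq[of v] zero_le_power2[of u] zero_le_power2[of v] by linarith
        then show ?thesis unfolding t_def by (simp add: algebra_simps)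
      qed
      then have "(\<bar>u\<bar> + \<bar>v\<bar>) * H \<le> (2 * (1 + t)) * H" by (rule mult_right_mono[OF _ H0])
      then show ?thesis by (simp add: algebra_simps)
    qed
    ultimately have "\<bar>u * snd (snd h) - v * fst (snd h)\<bar> \<le> 2 * (1 + t) * H" by linarith
    then have A: "2 * pi * \<bar>u * snd (snd h) - v * fst (snd h)\<bar> \<le> 2 * pi * (2 * (1 + t) * H)"
      by (intro mult_left_mono) auto
    have B: "2 * pi * (2 * (1 + t) * H) = 4 * pi * (1 + t) * H" by (simp add: algebra_simps)
    have C: "\<bar>Dpsi n h\<bar> = 2 * pi * \<bar>u * snd (snd h) - v * fst (snd h)\<bar>"
      by (simp add: Dpsi_def nn u_def v_def abs_mult)
    show ?thesis unfolding C B[symmetric] by (rule A)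
  qed
  have "norm (Dthh \<alpha> n p h) \<le> \<bar>DER \<alpha> n p h\<bar> + ER \<alpha> n p * \<bar>Dpsi n h\<bar>"
  proof -
    have "norm (Dthh \<alpha> n p h) \<le> norm (complex_of_real (DER \<alpha> n p h) * cis (psi n p))
       + norm (complex_of_real (ER \<alpha> n p) * (Dpsi n h *\<^sub>R (\<i> * cis (psi n p))))"
      unfolding Dthh_def by (rule norm_triangle_ineq)
    also have "\<dots> = \<bar>DER \<alpha> n p h\<bar> + ER \<alpha> n p * \<bar>Dpsi n h\<bar>"
      using ERpos by (simp add: norm_mult)
    finally show ?thesis .
  qed
  also have "\<dots> \<le> ER \<alpha> n p * (pi * \<alpha> * (34 * (1 + t) * H)) + ER \<alpha> n p * (4 * pi * (1 + t) * H)"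
    by (intro add_mono DERb mult_left_mono Dpsib ERpos)
  also have "\<dots> = ER \<alpha> n p * ((34 * pi * \<alpha> + 4 * pi) * (1 + t) * H)"
    by (simp add: algebra_simps)
  also have "\<dots> \<le> exp (pi * \<alpha> / 8) * exp (- (pi * \<alpha> / 32) * t) * ((34 * pi * \<alpha> + 4 * pi) * (1 + t) * H)"
  proof (rule mult_right_mono[OF ERb])
    have "0 \<le> 1 + t" unfolding t_def by simp
    then show "0 \<le> (34 * pi * \<alpha> + 4 * pi) * (1 + t) * H" using a H0 by simp
  qed
  finally show "norm (Dthh \<alpha> n p h) \<le> exp (pi * \<alpha> / 8) * exp (- (pi * \<alpha> / 32) * ((real_of_int (fst n))\<^sup>2 + (real_of_int (snd n))\<^sup>2))
           * ((34 * pi * \<alpha> + 4 * pi) * (1 + ((real_of_int (fst n))\<^sup>2 + (real_of_int (snd n))\<^sup>2)) * norm h)"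
    by (simp add: tdef H_def)
qed

lemma exp_abs_summable_int:
  fixes \<gamma> :: real assumes g: "\<gamma> > 0"
  shows "(\<lambda>k::int. exp (- \<gamma> * \<bar>real_of_int k\<bar>)) summable_on UNIV"
proof -
  define a where "a = (\<lambda>k::int. exp (- \<gamma> * \<bar>real_of_int k\<bar>))"
  have q: "exp (- \<gamma>) < 1" using g by simp
  have geo: "summable (\<lambda>n. exp (- \<gamma>) ^ n)"
    by (rule summable_geometric) (use q in simp)
  have e1: "exp (- (\<gamma> * real n)) = exp (- \<gamma>) ^ n" for n :: nat
  proof -
    have "exp (- \<gamma>) ^ n = exp (real n * (- \<gamma>))" by (rule exp_of_nat_mult[symmetric])
    then show ?thesis by (simp add: mult.commute)
  qed
  have s1: "(a \<circ> int) summable_on UNIV"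
  proof -
    have "(\<lambda>n. exp (- \<gamma>) ^ n) summable_on UNIV"
      by (rule summable_nonneg_imp_summable_on[OF geo]) simp
    moreover have "(a \<circ> int) = (\<lambda>n. exp (- \<gamma>) ^ n)"
      by (rule ext) (simp add: a_def e1)
    ultimately show ?thesis by simp
  qed
  have s2: "(a \<circ> (\<lambda>n. - int (Suc n))) summable_on UNIV"
  proof -
    have "(\<lambda>n. exp (- \<gamma>) * exp (- \<gamma>) ^ n) summable_on UNIV"
      by (rule summable_nonneg_imp_summable_on[OF summable_mult[OF geo]]) simp
    moreover have "(a \<circ> (\<lambda>n. - int (Suc n))) = (\<lambda>n. exp (- \<gamma>) * exp (- \<gamma>) ^ n)"
    proof (rule ext)
      fix n
      have "a (- int (Suc n)) = exp (- \<gamma>) ^ (Suc n)" unfolding a_def using e1[of "Suc n"] by (simp add: add.commute)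
      then show "(a \<circ> (\<lambda>n. - int (Suc n))) n = exp (- \<gamma>) * exp (- \<gamma>) ^ n" by simp
    qed
    ultimately show ?thesis by simp
  qed
  have A: "a summable_on range int"
    using s1 summable_on_reindex[of int UNIV a] by simp
  have B: "a summable_on range (\<lambda>n. - int (Suc n))"
    using s2 summable_on_reindex[of "\<lambda>n. - int (Suc n)" UNIV a] by (simp add: inj_def)
  have U: "range int \<union> range (\<lambda>n. - int (Suc n)) = (UNIV :: int set)"
  proof (rule set_eqI)
    fix k :: int
    show "k \<in> range int \<union> range (\<lambda>n. - int (Suc n)) \<longleftrightarrow> k \<in> UNIV"
    proof (cases "k \<ge> 0")
      case True then have "k = int (nat k)" by simp
      then show ?thesis by blast
    next
      case False then have "k = - int (Suc (nat (- k - 1)))" by simp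
      then show ?thesis by blast
    qed
  qed
  have D: "range int \<inter> range (\<lambda>n. - int (Suc n)) = {}" by auto
  show ?thesis
    using summable_on_Un_disjoint[OF A B D] unfolding U a_def .
qed

lemma gauss_int_summable:
  fixes \<gamma> :: real assumes g: "\<gamma> > 0"
  shows "(\<lambda>k::int. exp (- \<gamma> * (real_of_int k)\<^sup>2)) summable_on UNIV"
proof (rule summable_on_comparison_test[OF exp_abs_summable_int[OF g]])
  fix k :: int
  have "\<bar>real_of_int k\<bar> \<le> (real_of_int k)\<^sup>2"
  proof (cases "k = 0")
    case False
    then have "1 \<le> \<bar>real_of_int k\<bar>" by linarith
    then have "\<bar>real_of_int k\<bar> * 1 \<le> \<bar>real_of_int k\<bar> * \<bar>real_of_int k\<bar>"
      by (intro mult_left_mono) auto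
    then show ?thesis by (simp add: power2_eq_square)
  qed simp
  then show "exp (- \<gamma> * (real_of_int k)\<^sup>2) \<le> exp (- \<gamma> * \<bar>real_of_int k\<bar>)"
    using g by simp
qed simp

lemma gauss2_summable:
  fixes \<gamma> :: real assumes g: "\<gamma> > 0"
  shows "(\<lambda>(k::int, l::int). exp (- \<gamma> * ((real_of_int k)\<^sup>2 + (real_of_int l)\<^sup>2))) summable_on UNIV"
proof -
  define a where "a = (\<lambda>k::int. exp (- \<gamma> * (real_of_int k)\<^sup>2))"
  have sa: "a summable_on UNIV" unfolding a_def by (rule gauss_int_summable[OF g])
  have "(\<lambda>p. a (fst p) * a (snd p)) summable_on Sigma UNIV (\<lambda>_. UNIV)"
  proof (rule summable_on_SigmaI[where g = "\<lambda>k. a k * infsum a UNIV"])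
    show "((\<lambda>l. a (fst (k, l)) * a (snd (k, l))) has_sum a k * infsum a UNIV) UNIV" for k
      using has_sum_cmult_right[OF has_sum_infsum[OF sa], of "a k"] by simp
    show "(\<lambda>k. a k * infsum a UNIV) summable_on UNIV"
      by (rule summable_on_cmult_left[OF sa])
    show "0 \<le> a (fst (k, l)) * a (snd (k, l))" for k l by (simp add: a_def)
  qed
  moreover have "(\<lambda>p. a (fst p) * a (snd p)) = (\<lambda>(k::int, l::int). exp (- \<gamma> * ((real_of_int k)\<^sup>2 + (real_of_int l)\<^sup>2)))"
    by (auto simp: a_def fun_eq_iff exp_add[symmetric] algebra_simps)
  ultimately show ?thesis by simp
qed

lemma poly_gauss2_summable:
  fixes \<beta> :: real assumes b: "\<beta> > 0"
  shows "(\<lambda>(k::int, l::int). (1 + (real_of_int k)\<^sup>2 + (real_of_int l)\<^sup>2) * exp (- \<beta> * ((real_of_int k)\<^sup>2 + (real_of_int l)\<^sup>2))) summable_on UNIV"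
proof -
  have b2: "\<beta>/2 > 0" using b by simp
  have S: "(\<lambda>(k::int, l::int). (1 + 2/\<beta>) * exp (- (\<beta>/2) * ((real_of_int k)\<^sup>2 + (real_of_int l)\<^sup>2))) summable_on UNIV"
    using summable_on_cmult_right[OF gauss2_summable[OF b2], of "1 + 2/\<beta>"]
    by (simp add: case_prod_unfold)
  have key: "(1 + t) * exp (- \<beta> * t) \<le> (1 + 2/\<beta>) * exp (- (\<beta>/2) * t)" if t: "t \<ge> 0" for t :: real
  proof -
    have "1 + \<beta> * t / 2 \<le> exp (\<beta> * t / 2)" by (rule exp_ge_add_one_self_aux) (use b t in simp)
    then have "t \<le> (2/\<beta>) * exp (\<beta> * t / 2)"
      using b by (simp add: field_simps)
    then have "t * exp (- \<beta> * t) \<le> (2/\<beta>) * exp (\<beta> * t / 2) * exp (- \<beta> * t)"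
      by (rule mult_right_mono) simp
    also have "\<dots> = (2/\<beta>) * exp (- (\<beta>/2) * t)"
      by (simp add: mult.assoc exp_add[symmetric] field_simps)
    finally have 1: "t * exp (- \<beta> * t) \<le> (2/\<beta>) * exp (- (\<beta>/2) * t)" .
    have 2: "exp (- \<beta> * t) \<le> exp (- (\<beta>/2) * t)" using b t by (simp add: mult_right_mono)
    have 3: "(1 + t) * exp (- \<beta> * t) = exp (- \<beta> * t) + t * exp (- \<beta> * t)" by (simp add: algebra_simps)
    have 4: "(1 + 2/\<beta>) * exp (- (\<beta>/2) * t) = exp (- (\<beta>/2) * t) + (2/\<beta>) * exp (- (\<beta>/2) * t)"
      by (simp add: algebra_simps)
    show ?thesis unfolding 3 4 using 1 2 by linarith
  qed
  show ?thesis
  proof (rule summable_on_comparison_test[OF S])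
    fix p :: "int \<times> int"
    obtain k l where p: "p = (k, l)" by (cases p)
    have t: "(real_of_int k)\<^sup>2 + (real_of_int l)\<^sup>2 \<ge> 0" by simp
    show "(case p of (k, l) \<Rightarrow> (1 + (real_of_int k)\<^sup>2 + (real_of_int l)\<^sup>2) * exp (- \<beta> * ((real_of_int k)\<^sup>2 + (real_of_int l)\<^sup>2)))
        \<le> (case p of (k, l) \<Rightarrow> (1 + 2 / \<beta>) * exp (- (\<beta> / 2) * ((real_of_int k)\<^sup>2 + (real_of_int l)\<^sup>2)))"
      using key[OF t] by (simp add: p add.assoc)
    show "0 \<le> (case p of (k, l) \<Rightarrow> (1 + (real_of_int k)\<^sup>2 + (real_of_int l)\<^sup>2) * exp (- \<beta> * ((real_of_int k)\<^sup>2 + (real_of_int l)\<^sup>2)))"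
      by (simp add: p add_nonneg_nonneg)
  qed
qed

lemma infsum_differentiable:
  fixes f :: "int \<times> int \<Rightarrow> 'a::real_normed_vector \<Rightarrow> 'b::banach"
  assumes S: "convex S" "open S" "q0 \<in> S"
   and der: "\<And>n p. p \<in> S \<Longrightarrow> (f n has_derivative f' n p) (at p)"
   and bd: "\<And>n p h. p \<in> S \<Longrightarrow> norm (f' n p h) \<le> M n * norm h"
   and bd0: "\<And>n p. p \<in> S \<Longrightarrow> norm (f n p) \<le> M n"
   and Msum: "M summable_on UNIV"
  shows "(\<lambda>p. \<Sum>\<^sub>\<infinity>n. f n p) differentiable (at q0)"
proof -
  define e where "e = from_nat_into (UNIV :: (int \<times> int) set)"
  have inf: "infinite (UNIV :: (int \<times> int) set)"
    by (simp add: finite_prod)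
  have e: "bij_betw e UNIV UNIV"
    unfolding e_def by (rule bij_betw_from_nat_into[OF _ inf]) simp
  have Me: "summable (\<lambda>i. M (e i))"
    using Msum summable_on_reindex_bij_betw[OF e, of M] summable_on_imp_summable by blast
  have Mnn: "M n \<ge> 0" for n using order_trans[OF norm_ge_zero bd0[OF S(3)]] .
  have sumS: "(\<lambda>i. f (e i) p) sums (\<Sum>\<^sub>\<infinity>n. f n p)" if p: "p \<in> S" for p
  proof -
    have ns: "summable (\<lambda>i. norm (f (e i) p))"
      by (rule summable_comparison_test'[OF Me]) (use bd0[OF p] in auto)
    have sm: "(\<lambda>i. f (e i) p) sums (suminf (\<lambda>i. f (e i) p))"
      using summable_sums[OF summable_norm_cancel[OF ns]] .
    have eq1: "infsum (\<lambda>i. f (e i) p) UNIV = suminf (\<lambda>i. f (e i) p)"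
      by (rule infsumI[OF norm_summable_imp_has_sum[OF ns sm]])
    have eq2: "infsum (\<lambda>i. f (e i) p) UNIV = (\<Sum>\<^sub>\<infinity>n. f n p)"
      by (rule infsum_reindex_bij_betw[OF e])
    show ?thesis using sm by (simp only: eq1[symmetric] eq2)
  qed
  define g' where "g' x h = (\<Sum>i. f' (e i) x h)" for x h
  have unif: "\<forall>\<^sub>F n in sequentially. \<forall>x\<in>S. \<forall>h. norm (sum (\<lambda>i. f' (e i) x h) {..<n} - g' x h) \<le> \<epsilon> * norm h"
    if eps: "\<epsilon> > 0" for \<epsilon>
  proof -
    obtain N where N: "\<And>n. n \<ge> N \<Longrightarrow> norm (\<Sum>i. M (e (i + n))) < \<epsilon>"
      using suminf_exist_split[OF eps Me] by blast
    show ?thesis unfolding eventually_sequentially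
    proof (intro exI[of _ N] allI impI ballI)
      fix n x and h :: 'a assume n: "N \<le> n" and x: "x \<in> S"
      have s1: "summable (\<lambda>i. M (e i) * norm h)" by (rule summable_mult2[OF Me])
      have ns: "summable (\<lambda>i. norm (f' (e i) x h))"
        by (rule summable_comparison_test'[OF s1]) (use bd[OF x] in auto)
      have sm: "summable (\<lambda>i. f' (e i) x h)" by (rule summable_norm_cancel[OF ns])
      have sh1: "summable (\<lambda>i. norm (f' (e (i + n)) x h))"
        by (rule summable_ignore_initial_segment[OF ns])
      have sh2: "summable (\<lambda>i. M (e (i + n)) * norm h)"
        by (rule summable_ignore_initial_segment[OF s1])
      have sh3: "summable (\<lambda>i. M (e (i + n)))"
        by (rule summable_ignore_initial_segment[OF Me])
      have "sum (\<lambda>i. f' (e i) x h) {..<n} - g' x h = - (\<Sum>i. f' (e (i + n)) x h)"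
        unfolding g'_def using suminf_minus_initial_segment[OF sm, of n] by simp
      then have "norm (sum (\<lambda>i. f' (e i) x h) {..<n} - g' x h) = norm (\<Sum>i. f' (e (i + n)) x h)"
        by simp
      also have "\<dots> \<le> (\<Sum>i. norm (f' (e (i + n)) x h))"
        by (rule summable_norm[OF sh1])
      also have "\<dots> \<le> (\<Sum>i. M (e (i + n)) * norm h)"
        by (rule suminf_le[OF _ sh1 sh2]) (rule bd[OF x])
      also have "\<dots> = (\<Sum>i. M (e (i + n))) * norm h"
        by (rule suminf_mult2[OF sh3, symmetric])
      also have "\<dots> \<le> \<epsilon> * norm h"
      proof (rule mult_right_mono)
        have "(\<Sum>i. M (e (i + n))) \<le> norm (\<Sum>i. M (e (i + n)))" unfolding real_norm_def by (rule abs_ge_self)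
        then show "(\<Sum>i. M (e (i + n))) \<le> \<epsilon>" using N[OF n] by linarith
      qed simp
      finally show "norm (sum (\<lambda>i. f' (e i) x h) {..<n} - g' x h) \<le> \<epsilon> * norm h" .
    qed
  qed
  have "\<exists>g. \<forall>x\<in>S. (\<lambda>n. f (e n) x) sums (g x) \<and> (g has_derivative g' x) (at x within S)"
    by (rule has_derivative_series[where f = "\<lambda>i. f (e i)" and f' = "\<lambda>i. f' (e i)" and g' = g', OF S(1) _ unif S(3) sumS[OF S(3)]])
       (rule has_derivative_at_withinI[OF der])
  then obtain g where g: "\<And>x. x \<in> S \<Longrightarrow> (\<lambda>n. f (e n) x) sums (g x)"
    "\<And>x. x \<in> S \<Longrightarrow> (g has_derivative g' x) (at x within S)" by blast
  have "(g has_derivative g' q0) (at q0)"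
    using g(2)[OF S(3)] at_within_open[OF S(3,2)] by simp
  then have "((\<lambda>p. \<Sum>\<^sub>\<infinity>n. f n p) has_derivative g' q0) (at q0)"
    by (rule has_derivative_transform_within_open[OF _ S(2,3)])
       (rule sums_unique2[OF g(1) sumS])
  then show ?thesis unfolding differentiable_def by blast
qed

definition Mb :: "real \<Rightarrow> int \<times> int \<Rightarrow> real" where
  "Mb \<alpha> n = (1 + 204 * pi * \<alpha> + 4 * pi) * exp (pi * \<alpha> / 8) *
     ((1 + (real_of_int (fst n))\<^sup>2 + (real_of_int (snd n))\<^sup>2) * exp (- (pi * \<alpha> / 32) * ((real_of_int (fst n))\<^sup>2 + (real_of_int (snd n))\<^sup>2)))"

lemma Mb_summable: assumes a: "\<alpha> > 0" shows "Mb \<alpha> summable_on UNIV"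
proof -
  have b: "pi * \<alpha> / 32 > 0" using a by simp
  have "(\<lambda>n. (1 + 204 * pi * \<alpha> + 4 * pi) * exp (pi * \<alpha> / 8) *
      (case n of (k, l) \<Rightarrow> (1 + (real_of_int k)\<^sup>2 + (real_of_int l)\<^sup>2) * exp (- (pi * \<alpha> / 32) * ((real_of_int k)\<^sup>2 + (real_of_int l)\<^sup>2))))
      summable_on UNIV"
    by (rule summable_on_cmult_right[OF poly_gauss2_summable[OF b]])
  then show ?thesis unfolding Mb_def by (simp add: case_prod_unfold)
qed

lemma Mb_ge:
  assumes a: "\<alpha> > 0" and c: "0 \<le> c" "c \<le> 1 + 204 * pi * \<alpha> + 4 * pi" and H: "0 \<le> H"
  shows "exp (pi * \<alpha> / 8) * exp (- (pi * \<alpha> / 32) * ((real_of_int (fst n))\<^sup>2 + (real_of_int (snd n))\<^sup>2))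
          * (c * (1 + ((real_of_int (fst n))\<^sup>2 + (real_of_int (snd n))\<^sup>2)) * H) \<le> Mb \<alpha> n * H"
proof -
  define t where "t = (real_of_int (fst n))\<^sup>2 + (real_of_int (snd n))\<^sup>2"
  define E where "E = exp (pi * \<alpha> / 8) * exp (- (pi * \<alpha> / 32) * t)"
  have E0: "0 \<le> E" by (simp add: E_def)
  have t0: "0 \<le> 1 + t" by (simp add: t_def)
  have "E * (c * (1 + t) * H) = (c * (E * (1 + t))) * H" by (simp add: algebra_simps)
  also have "\<dots> \<le> ((1 + 204 * pi * \<alpha> + 4 * pi) * (E * (1 + t))) * H"
    by (intro mult_right_mono c H mult_nonneg_nonneg E0 t0)
  also have "\<dots> = Mb \<alpha> n * H" by (simp add: Mb_def E_def t_def algebra_simps)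
  finally show ?thesis by (simp add: E_def t_def)
qed

lemma G_theta_diff: assumes a: "\<alpha> > 0" shows "(\<lambda>p. \<Sum>\<^sub>\<infinity>n. tht \<alpha> n p) differentiable (at p0)"
proof (rule infsum_differentiable[where S = "ball p0 (1/10)" and f' = "Dtht \<alpha>" and M = "Mb \<alpha>"])
  show "convex (ball p0 (1/10))" "open (ball p0 (1/10))" "p0 \<in> ball p0 (1/10)" by auto
  show "Mb \<alpha> summable_on UNIV" by (rule Mb_summable[OF a])
  fix n p assume p: "p \<in> ball p0 (1/10)"
  have y: "snd (fst p) \<noteq> 0" using region(3)[OF p] by linarith
  show "(tht \<alpha> n has_derivative Dtht \<alpha> n p) (at p)" by (rule tht_deriv[OF y])
  have c: "0 \<le> 170 * pi * \<alpha>" "170 * pi * \<alpha> \<le> 1 + 204 * pi * \<alpha> + 4 * pi" using a by auto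
  have t0: "0 \<le> 1 + ((real_of_int (fst n))\<^sup>2 + (real_of_int (snd n))\<^sup>2)" by simp
  show "norm (Dtht \<alpha> n p h) \<le> Mb \<alpha> n * norm h" for h
  proof -
    have "norm (Dtht \<alpha> n p h) \<le> tht \<alpha> n p * (170 * pi * \<alpha> * (1 + ((real_of_int (fst n))\<^sup>2 + (real_of_int (snd n))\<^sup>2)) * norm h)"
      using tht_bounds(2)[OF p a, of n h] by simp
    also have "\<dots> \<le> exp (pi * \<alpha> / 8) * exp (- (pi * \<alpha> / 32) * ((real_of_int (fst n))\<^sup>2 + (real_of_int (snd n))\<^sup>2))
          * (170 * pi * \<alpha> * (1 + ((real_of_int (fst n))\<^sup>2 + (real_of_int (snd n))\<^sup>2)) * norm h)"
      by (intro mult_right_mono tht_bounds(1)[OF p a] mult_nonneg_nonneg c t0) simp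
    also have "\<dots> \<le> Mb \<alpha> n * norm h" by (rule Mb_ge[OF a c]) simp
    finally show ?thesis .
  qed
  have c1: "0 \<le> (1::real)" "1 \<le> 1 + 204 * pi * \<alpha> + 4 * pi" using a by auto
  show "norm (tht \<alpha> n p) \<le> Mb \<alpha> n"
  proof -
    have "norm (tht \<alpha> n p) = tht \<alpha> n p" by (simp add: tht_def)
    also have "\<dots> \<le> exp (pi * \<alpha> / 8) * exp (- (pi * \<alpha> / 32) * ((real_of_int (fst n))\<^sup>2 + (real_of_int (snd n))\<^sup>2))"
      by (rule tht_bounds(1)[OF p a])
    also have "\<dots> \<le> exp (pi * \<alpha> / 8) * exp (- (pi * \<alpha> / 32) * ((real_of_int (fst n))\<^sup>2 + (real_of_int (snd n))\<^sup>2))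
          * (1 * (1 + ((real_of_int (fst n))\<^sup>2 + (real_of_int (snd n))\<^sup>2)) * 1)"
      (is "?E \<le> ?E * ?F")
    proof -
      have "?E * 1 \<le> ?E * ?F"
        by (rule mult_left_mono) (use zero_le_power2[of "real_of_int (fst n)"] zero_le_power2[of "real_of_int (snd n)"] in simp_all)
      then show ?thesis by simp
    qed
    also have "\<dots> \<le> Mb \<alpha> n * 1" by (rule Mb_ge[OF a c1]) simp
    finally show ?thesis by simp
  qed
qed

lemma G_thetahat_diff: assumes a: "\<alpha> > 0" shows "(\<lambda>p. \<Sum>\<^sub>\<infinity>n. thh \<alpha> n p) differentiable (at p0)"
proof (rule infsum_differentiable[where S = "ball p0 (1/10)" and f' = "Dthh \<alpha>" and M = "Mb \<alpha>"])
  show "convex (ball p0 (1/10))" "open (ball p0 (1/10))" "p0 \<in> ball p0 (1/10)" by auto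
  show "Mb \<alpha> summable_on UNIV" by (rule Mb_summable[OF a])
  fix n p assume p: "p \<in> ball p0 (1/10)"
  have y: "snd (fst p) \<noteq> 0" using region(3)[OF p] by linarith
  show "(thh \<alpha> n has_derivative Dthh \<alpha> n p) (at p)" by (rule thh_deriv[OF y])
  have c: "0 \<le> 34 * pi * \<alpha> + 4 * pi" "34 * pi * \<alpha> + 4 * pi \<le> 1 + 204 * pi * \<alpha> + 4 * pi" using a by auto
  show "norm (Dthh \<alpha> n p h) \<le> Mb \<alpha> n * norm h" for h
    using order_trans[OF thh_bounds(2)[OF p a, of n h] Mb_ge[OF a c norm_ge_zero]] .
  have c1: "0 \<le> (1::real)" "1 \<le> 1 + 204 * pi * \<alpha> + 4 * pi" using a by auto
  have t0: "0 \<le> 1 + ((real_of_int (fst n))\<^sup>2 + (real_of_int (snd n))\<^sup>2)" by simp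
  show "norm (thh \<alpha> n p) \<le> Mb \<alpha> n"
  proof -
    have "norm (thh \<alpha> n p) \<le> exp (pi * \<alpha> / 8) * exp (- (pi * \<alpha> / 32) * ((real_of_int (fst n))\<^sup>2 + (real_of_int (snd n))\<^sup>2))"
      by (rule thh_bounds(1)[OF p a])
    also have "\<dots> \<le> exp (pi * \<alpha> / 8) * exp (- (pi * \<alpha> / 32) * ((real_of_int (fst n))\<^sup>2 + (real_of_int (snd n))\<^sup>2))
          * (1 * (1 + ((real_of_int (fst n))\<^sup>2 + (real_of_int (snd n))\<^sup>2)) * 1)"
      (is "?E \<le> ?E * ?F")
    proof -
      have "?E * 1 \<le> ?E * ?F"
        by (rule mult_left_mono) (use zero_le_power2[of "real_of_int (fst n)"] zero_le_power2[of "real_of_int (snd n)"] in simp_all)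
      then show ?thesis by simp
    qed
    also have "\<dots> \<le> Mb \<alpha> n * 1" by (rule Mb_ge[OF a c1]) simp
    finally show ?thesis by simp
  qed
qed

definition SA :: "(real \<times> real) \<times> (real \<times> real) \<Rightarrow> (real \<times> real) \<times> (real \<times> real)" where
  "SA p = ((1 - fst (fst p), snd (fst p)), (1 - fst (snd p) - snd (snd p), snd (snd p)))"

definition SB :: "(real \<times> real) \<times> (real \<times> real) \<Rightarrow> (real \<times> real) \<times> (real \<times> real)" where
  "SB p = ((1 - fst (fst p) / ((fst (fst p))\<^sup>2 + (snd (fst p))\<^sup>2), snd (fst p) / ((fst (fst p))\<^sup>2 + (snd (fst p))\<^sup>2)),
           (1 - fst (snd p) - snd (snd p), fst (snd p)))"

lemma sb_alg: fixes x y u v :: real assumes r: "x\<^sup>2 + y\<^sup>2 \<noteq> 0"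
  shows "u\<^sup>2 + 2 * (1 - x / (x\<^sup>2 + y\<^sup>2)) * u * v + ((1 - x / (x\<^sup>2 + y\<^sup>2))\<^sup>2 + (y / (x\<^sup>2 + y\<^sup>2))\<^sup>2) * v\<^sup>2
       = (v\<^sup>2 + 2 * x * v * (- (u + v)) + (x\<^sup>2 + y\<^sup>2) * (- (u + v))\<^sup>2) / (x\<^sup>2 + y\<^sup>2)"
proof -
  define r where "r = x\<^sup>2 + y\<^sup>2"
  have r0: "r \<noteq> 0" using r by (simp add: r_def)
  have e: "(1 - x / r)\<^sup>2 + (y / r)\<^sup>2 = 1 - 2 * x / r + 1 / r"
  proof -
    have "(1 - x / r)\<^sup>2 + (y / r)\<^sup>2 = 1 - 2 * x / r + (x\<^sup>2 + y\<^sup>2) / r\<^sup>2"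
      using r0 by (simp add: power2_eq_square field_simps)
    also have "\<dots> = 1 - 2 * x / r + r / r\<^sup>2" by (simp add: r_def)
    also have "\<dots> = 1 - 2 * x / r + 1 / r" using r0 by (simp add: power2_eq_square)
    finally show ?thesis .
  qed
  have "u\<^sup>2 + 2 * (1 - x / r) * u * v + ((1 - x / r)\<^sup>2 + (y / r)\<^sup>2) * v\<^sup>2
      = (u + v)\<^sup>2 + (v\<^sup>2 - 2 * x * v * (u + v)) / r"
    unfolding e using r0 by (simp add: field_simps power2_eq_square)
  also have "\<dots> = (v\<^sup>2 + 2 * x * v * (- (u + v)) + r * (- (u + v))\<^sup>2) / r"
    using r0 by (simp add: field_simps power2_eq_square)
  finally show ?thesis unfolding r_def .
qed

lemma Pq_SA: "Pq (k, l) (SA p) = Pq (- k - l - 1, l) p"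
  by (simp add: Pq_def SA_def algebra_simps power2_eq_square)

lemma Pq_SB:
  assumes y: "snd (fst p) \<noteq> 0"
  shows "Pq (k, l) (SB p) = Pq (l, - k - l - 1) p / ((fst (fst p))\<^sup>2 + (snd (fst p))\<^sup>2)"
proof -
  obtain x y c1 c2 where pp: "p = ((x, y), (c1, c2))" by (metis prod.collapse)
  have y0: "y \<noteq> 0" using y by (simp add: pp)
  have r: "x\<^sup>2 + y\<^sup>2 \<noteq> 0" using y0 by (simp add: add_nonneg_eq_0_iff)
  define u where "u = real_of_int k + (1 - c1 - c2)"
  define v where "v = real_of_int l + c1"
  have 1: "Pq (k, l) (SB p) = u\<^sup>2 + 2 * (1 - x / (x\<^sup>2 + y\<^sup>2)) * u * v + ((1 - x / (x\<^sup>2 + y\<^sup>2))\<^sup>2 + (y / (x\<^sup>2 + y\<^sup>2))\<^sup>2) * v\<^sup>2"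
    by (simp add: Pq_def SB_def pp u_def v_def)
  have uv: "real_of_int (- k - l - 1) + c2 = - (u + v)" by (simp add: u_def v_def)
  have 2: "Pq (l, - k - l - 1) p = v\<^sup>2 + 2 * x * v * (- (u + v)) + (x\<^sup>2 + y\<^sup>2) * (- (u + v))\<^sup>2"
    by (simp add: Pq_def pp u_def v_def algebra_simps power2_eq_square)
  show ?thesis unfolding 1 2 using sb_alg[OF r, of u v] by (simp add: pp)
qed

lemma Rq_SA: "Rq (k, l) (SA p) = Rq (k + l, - l) p"
  by (simp add: Rq_def SA_def algebra_simps power2_eq_square)

lemma Rq_SB:
  assumes y: "snd (fst p) \<noteq> 0"
  shows "Rq (k, l) (SB p) = Rq (l, - k - l) p / ((fst (fst p))\<^sup>2 + (snd (fst p))\<^sup>2)"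
proof -
  obtain x y c1 c2 where pp: "p = ((x, y), (c1, c2))" by (metis prod.collapse)
  have y0: "y \<noteq> 0" using y by (simp add: pp)
  have r: "x\<^sup>2 + y\<^sup>2 \<noteq> 0" using y0 by (simp add: add_nonneg_eq_0_iff)
  define u where "u = real_of_int k"
  define v where "v = real_of_int l"
  have 1: "Rq (k, l) (SB p) = u\<^sup>2 + 2 * (1 - x / (x\<^sup>2 + y\<^sup>2)) * u * v + ((1 - x / (x\<^sup>2 + y\<^sup>2))\<^sup>2 + (y / (x\<^sup>2 + y\<^sup>2))\<^sup>2) * v\<^sup>2"
    by (simp add: Rq_def SB_def pp u_def v_def)
  have uv: "real_of_int (- k - l) = - (u + v)" by (simp add: u_def v_def)
  have 2: "Rq (l, - k - l) p = v\<^sup>2 + 2 * x * v * (- (u + v)) + (x\<^sup>2 + y\<^sup>2) * (- (u + v))\<^sup>2"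
    by (simp add: Rq_def pp u_def v_def algebra_simps power2_eq_square)
  show ?thesis unfolding 1 2 using sb_alg[OF r, of u v] by (simp add: pp)
qed

lemma div_cancel_aux: fixes a y r X :: real assumes "r \<noteq> 0" shows "a / (y / r) * (X / r) = a / y * X"
  using assms by (cases "y = 0") (simp_all add: field_simps)

lemma tht_SA: "tht \<alpha> (k, l) (SA p) = tht \<alpha> (- k - l - 1, l) p"
  by (simp add: tht_def Pq_SA) (simp add: SA_def)

lemma tht_SB:
  assumes y: "snd (fst p) \<noteq> 0"
  shows "tht \<alpha> (k, l) (SB p) = tht \<alpha> (l, - k - l - 1) p"
proof -
  have r: "(fst (fst p))\<^sup>2 + (snd (fst p))\<^sup>2 \<noteq> 0" using y by (simp add: add_nonneg_eq_0_iff)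
  have "pi * \<alpha> / snd (fst (SB p)) * Pq (k, l) (SB p) = pi * \<alpha> / snd (fst p) * Pq (l, - k - l - 1) p"
    unfolding Pq_SB[OF y] using div_cancel_aux[OF r] by (simp add: SB_def)
  then show ?thesis by (simp add: tht_def)
qed

lemma cis_shift: "cis (a + 2 * pi * real_of_int m) = cis a"
proof -
  have 1: "cis (a + 2 * pi * real_of_int m) = cis a * cis (2 * pi * real_of_int m)" by (rule cis_mult[symmetric])
  have 2: "cis (2 * pi * real_of_int m) = 1" by (rule cis_multiple_2pi) simp
  show ?thesis using 1 2 by simp
qed

lemma thh_SA: "thh \<alpha> (k, l) (SA p) = thh \<alpha> (k + l, - l) p"
proof -
  have e: "ER \<alpha> (k, l) (SA p) = ER \<alpha> (k + l, - l) p"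
    by (simp add: ER_def Rq_SA) (simp add: SA_def)
  have ps: "psi (k, l) (SA p) = psi (k + l, - l) p + 2 * pi * real_of_int (- l)"
    by (simp add: psi_def SA_def algebra_simps)
  show ?thesis unfolding thh_def e ps cis_shift ..
qed

lemma thh_SB:
  assumes y: "snd (fst p) \<noteq> 0"
  shows "thh \<alpha> (k, l) (SB p) = thh \<alpha> (l, - k - l) p"
proof -
  have r: "(fst (fst p))\<^sup>2 + (snd (fst p))\<^sup>2 \<noteq> 0" using y by (simp add: add_nonneg_eq_0_iff)
  have "pi * \<alpha> / snd (fst (SB p)) * Rq (k, l) (SB p) = pi * \<alpha> / snd (fst p) * Rq (l, - k - l) p"
    unfolding Rq_SB[OF y] using div_cancel_aux[OF r] by (simp add: SB_def)
  then have e: "ER \<alpha> (k, l) (SB p) = ER \<alpha> (l, - k - l) p" by (simp add: ER_def)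
  have ps: "psi (k, l) (SB p) = psi (l, - k - l) p + 2 * pi * real_of_int (- l)"
    by (simp add: psi_def SB_def algebra_simps)
  show ?thesis unfolding thh_def e ps cis_shift ..
qed

lemma sum_SA_theta: "(\<Sum>\<^sub>\<infinity>n. tht \<alpha> n (SA p)) = (\<Sum>\<^sub>\<infinity>n. tht \<alpha> n p)"
proof -
  define \<sigma> where "\<sigma> = (\<lambda>n::int \<times> int. (- fst n - snd n - 1, snd n))"
  have b: "bij_betw \<sigma> UNIV UNIV"
    by (rule o_bij[where g = \<sigma>]) (auto simp: \<sigma>_def fun_eq_iff)
  have "(\<Sum>\<^sub>\<infinity>n. tht \<alpha> n (SA p)) = (\<Sum>\<^sub>\<infinity>n. tht \<alpha> (\<sigma> n) p)"
    by (rule infsum_cong) (auto simp: \<sigma>_def tht_SA split: prod.splits)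
  also have "\<dots> = (\<Sum>\<^sub>\<infinity>n. tht \<alpha> n p)" by (rule infsum_reindex_bij_betw[OF b])
  finally show ?thesis .
qed

lemma sum_SB_theta: assumes y: "snd (fst p) \<noteq> 0"
  shows "(\<Sum>\<^sub>\<infinity>n. tht \<alpha> n (SB p)) = (\<Sum>\<^sub>\<infinity>n. tht \<alpha> n p)"
proof -
  define \<sigma> where "\<sigma> = (\<lambda>n::int \<times> int. (snd n, - fst n - snd n - 1))"
  define \<tau> where "\<tau> = (\<lambda>n::int \<times> int. (- fst n - snd n - 1, fst n))"
  have b: "bij_betw \<sigma> UNIV UNIV"
    by (rule o_bij[where g = \<tau>]) (auto simp: \<sigma>_def \<tau>_def fun_eq_iff)
  have "(\<Sum>\<^sub>\<infinity>n. tht \<alpha> n (SB p)) = (\<Sum>\<^sub>\<infinity>n. tht \<alpha> (\<sigma> n) p)"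
    by (rule infsum_cong) (auto simp: \<sigma>_def tht_SB[OF y] split: prod.splits)
  also have "\<dots> = (\<Sum>\<^sub>\<infinity>n. tht \<alpha> n p)" by (rule infsum_reindex_bij_betw[OF b])
  finally show ?thesis .
qed

lemma sum_SA_thetahat: "(\<Sum>\<^sub>\<infinity>n. thh \<alpha> n (SA p)) = (\<Sum>\<^sub>\<infinity>n. thh \<alpha> n p)"
proof -
  define \<sigma> where "\<sigma> = (\<lambda>n::int \<times> int. (fst n + snd n, - snd n))"
  have b: "bij_betw \<sigma> UNIV UNIV"
    by (rule o_bij[where g = \<sigma>]) (auto simp: \<sigma>_def fun_eq_iff)
  have "(\<Sum>\<^sub>\<infinity>n. thh \<alpha> n (SA p)) = (\<Sum>\<^sub>\<infinity>n. thh \<alpha> (\<sigma> n) p)"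
    by (rule infsum_cong) (auto simp: \<sigma>_def thh_SA split: prod.splits)
  also have "\<dots> = (\<Sum>\<^sub>\<infinity>n. thh \<alpha> n p)" by (rule infsum_reindex_bij_betw[OF b])
  finally show ?thesis .
qed

lemma sum_SB_thetahat: assumes y: "snd (fst p) \<noteq> 0"
  shows "(\<Sum>\<^sub>\<infinity>n. thh \<alpha> n (SB p)) = (\<Sum>\<^sub>\<infinity>n. thh \<alpha> n p)"
proof -
  define \<sigma> where "\<sigma> = (\<lambda>n::int \<times> int. (snd n, - fst n - snd n))"
  define \<tau> where "\<tau> = (\<lambda>n::int \<times> int. (- fst n - snd n, fst n))"
  have b: "bij_betw \<sigma> UNIV UNIV"
    by (rule o_bij[where g = \<tau>]) (auto simp: \<sigma>_def \<tau>_def fun_eq_iff)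
  have "(\<Sum>\<^sub>\<infinity>n. thh \<alpha> n (SB p)) = (\<Sum>\<^sub>\<infinity>n. thh \<alpha> (\<sigma> n) p)"
    by (rule infsum_cong) (auto simp: \<sigma>_def thh_SB[OF y] split: prod.splits)
  also have "\<dots> = (\<Sum>\<^sub>\<infinity>n. thh \<alpha> n p)" by (rule infsum_reindex_bij_betw[OF b])
  finally show ?thesis .
qed

definition DA :: "(real \<times> real) \<times> (real \<times> real) \<Rightarrow> (real \<times> real) \<times> (real \<times> real)" where
  "DA h = ((- fst (fst h), snd (fst h)), (- fst (snd h) - snd (snd h), snd (snd h)))"

definition DB :: "(real \<times> real) \<times> (real \<times> real) \<Rightarrow> (real \<times> real) \<times> (real \<times> real)" where
  "DB h = ((- (1/2) * fst (fst h) + sqrt 3 / 2 * snd (fst h), - (sqrt 3 / 2) * fst (fst h) - (1/2) * snd (fst h)),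
           (- fst (snd h) - snd (snd h), fst (snd h)))"

lemma SA_deriv: "(SA has_derivative DA) (at p)"
  unfolding SA_def[abs_def]
  apply (rule has_derivative_eq_rhs)
   apply (rule derivative_eq_intros refl)+
  apply (simp add: DA_def fun_eq_iff)
  done

lemma p0_r: "(fst (fst p0))\<^sup>2 + (snd (fst p0))\<^sup>2 = 1"
  by (simp add: p0_def power_divide)

lemma SB_deriv: "(SB has_derivative DB) (at p0)"
proof -
  have r: "(fst (fst p0))\<^sup>2 + (snd (fst p0))\<^sup>2 \<noteq> 0" using p0_r by simp
  show ?thesis
    unfolding SB_def[abs_def]
    apply (rule has_derivative_eq_rhs)
     apply (rule derivative_eq_intros refl r)+
    apply (simp add: DB_def fun_eq_iff p0_r)
    apply (simp add: p0_def power2_eq_square algebra_simps)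
    done
qed

lemma SA_p0: "SA p0 = p0" by (simp add: SA_def p0_def)
lemma SB_p0: "SB p0 = p0" using p0_r by (simp add: SB_def) (simp add: p0_def)

lemma self_neg_zero: fixes x :: "'b::real_vector" assumes "x = - x" shows "x = 0"
proof -
  have "x + x = 0" using assms by (metis add.right_inverse)
  then have "(2::real) *\<^sub>R x = 0" by (simp add: scaleR_2)
  then show ?thesis by simp
qed

lemma self_scale_zero: fixes x :: "'b::real_vector" assumes "x = c *\<^sub>R x" "c \<noteq> 1" shows "x = 0"
proof -
  have "(1 - c) *\<^sub>R x = x - c *\<^sub>R x" by (simp add: scaleR_left_diff_distrib)
  also have "\<dots> = 0" using assms(1) by simp
  finally show ?thesis using assms(2) by simp
qed

lemma openU: "open {p :: (real \<times> real) \<times> (real \<times> real). 0 < snd (fst p)}"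
  by (auto intro!: open_Collect_less continuous_intros)

lemma p0U: "p0 \<in> {p :: (real \<times> real) \<times> (real \<times> real). 0 < snd (fst p)}"
  by (simp add: p0_def)

lemma sym_inv_deriv:
  fixes G :: "(real \<times> real) \<times> (real \<times> real) \<Rightarrow> 'b::real_normed_vector"
  assumes der: "(G has_derivative L) (at p0)"
    and S_deriv: "(S has_derivative D) (at p0)" and Sp0: "S p0 = p0"
    and sym: "\<And>p. 0 < snd (fst p) \<Longrightarrow> G (S p) = G p"
  shows "L \<circ> D = L"
proof -
  have d1: "((G \<circ> S) has_derivative (L \<circ> D)) (at p0)"
    by (rule diff_chain_at[OF S_deriv]) (simp add: Sp0 der)
  have d2: "((G \<circ> S) has_derivative L) (at p0)"
    by (rule has_derivative_transform_within_open[OF der openU p0U]) (simp add: sym)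
  show ?thesis by (rule has_derivative_unique[OF d1 d2])
qed

lemma sym_zero:
  fixes G :: "(real \<times> real) \<times> (real \<times> real) \<Rightarrow> 'b::real_normed_vector"
  assumes der: "(G has_derivative L) (at p0)"
    and symA: "\<And>p. 0 < snd (fst p) \<Longrightarrow> G (SA p) = G p"
    and symB: "\<And>p. 0 < snd (fst p) \<Longrightarrow> G (SB p) = G p"
  shows "L = (\<lambda>h. 0)"
proof -
  have eA: "L \<circ> DA = L" by (rule sym_inv_deriv[OF der SA_deriv SA_p0 symA])
  have eB: "L \<circ> DB = L" by (rule sym_inv_deriv[OF der SB_deriv SB_p0 symB])
  have bl: "bounded_linear L" by (rule has_derivative_bounded_linear[OF der])
  have lin: "linear L" using bl by (rule bounded_linear.linear)
  have add: "L (x + y) = L x + L y" for x y using lin by (rule linear_add)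
  have scl: "L (r *\<^sub>R x) = r *\<^sub>R L x" for r x using lin by (rule linear_scale)
  have neg: "L (- x) = - L x" for x using lin by (rule linear_neg)
  have A: "L (DA h) = L h" for h using eA by (metis comp_apply)
  have B: "L (DB h) = L h" for h using eB by (metis comp_apply)
  define e1 :: "(real \<times> real) \<times> (real \<times> real)" where "e1 = ((1, 0), (0, 0))"
  define e2 :: "(real \<times> real) \<times> (real \<times> real)" where "e2 = ((0, 1), (0, 0))"
  define e3 :: "(real \<times> real) \<times> (real \<times> real)" where "e3 = ((0, 0), (1, 0))"
  define e4 :: "(real \<times> real) \<times> (real \<times> real)" where "e4 = ((0, 0), (0, 1))"
  have "DA e1 = - e1" by (simp add: DA_def e1_def)
  then have "L e1 = - L e1" using A[of e1] neg[of e1] by simp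
  then have z1: "L e1 = 0" by (rule self_neg_zero)
  have "DA e3 = - e3" by (simp add: DA_def e3_def)
  then have "L e3 = - L e3" using A[of e3] neg[of e3] by simp
  then have z3: "L e3 = 0" by (rule self_neg_zero)
  have db2: "DB e2 = (sqrt 3 / 2) *\<^sub>R e1 + (- 1/2) *\<^sub>R e2" by (simp add: DB_def e1_def e2_def)
  have "L e2 = L (DB e2)" using B[of e2] by simp
  also have "\<dots> = L ((sqrt 3 / 2) *\<^sub>R e1 + (- 1/2) *\<^sub>R e2)" by (simp only: db2)
  also have "\<dots> = (sqrt 3 / 2) *\<^sub>R L e1 + (- 1/2) *\<^sub>R L e2" by (simp only: add scl)
  also have "\<dots> = (- 1/2) *\<^sub>R L e2" by (simp only: z1 scaleR_zero_right add_0_left)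
  finally have "L e2 = (- 1/2) *\<^sub>R L e2" .
  then have z2: "L e2 = 0" by (rule self_scale_zero) simp
  have db3: "DB e3 = - e3 + e4" by (simp add: DB_def e3_def e4_def)
  have "L e3 = L (DB e3)" using B[of e3] by simp
  also have "\<dots> = L (- e3 + e4)" by (simp only: db3)
  also have "\<dots> = - L e3 + L e4" by (simp only: add neg)
  finally have "L e3 = - L e3 + L e4" .
  then have z4: "L e4 = 0" using z3 by simp
  show ?thesis
  proof (rule ext)
    fix h :: "(real \<times> real) \<times> (real \<times> real)"
    have "h = fst (fst h) *\<^sub>R e1 + snd (fst h) *\<^sub>R e2 + fst (snd h) *\<^sub>R e3 + snd (snd h) *\<^sub>R e4"
      by (simp add: e1_def e2_def e3_def e4_def prod_eq_iff)
    then have "L h = fst (fst h) *\<^sub>R L e1 + snd (fst h) *\<^sub>R L e2 + fst (snd h) *\<^sub>R L e3 + snd (snd h) *\<^sub>R L e4"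
      using add scl by metis
    then show "L h = 0" using z1 z2 z3 z4 by simp
  qed
qed

lemma theta_eq: "theta z c \<alpha> = (\<Sum>\<^sub>\<infinity>n. tht \<alpha> n (z, c))"
  by (cases z, cases c) (simp add: theta_def tht_def Pq_def case_prod_unfold)

lemma theta_hat_eq: "theta_hat z c \<alpha> = (\<Sum>\<^sub>\<infinity>n. thh \<alpha> n (z, c))"
  by (cases z, cases c) (simp add: theta_hat_def thh_def ER_def Rq_def psi_def case_prod_unfold)

lemma circ_a_p0: "circ_a (1/2, sqrt 3 / 2) = (1/3, 1/3)"
  by (simp add: circ_a_def power_divide)

lemma final_from_G:
  fixes G :: "(real \<times> real) \<times> (real \<times> real) \<Rightarrow> 'b::real_normed_vector"
    and c :: "real \<times> real \<Rightarrow> real \<times> real"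
  assumes Gd: "G differentiable (at p0)"
    and symA: "\<And>p. 0 < snd (fst p) \<Longrightarrow> G (SA p) = G p"
    and symB: "\<And>p. 0 < snd (fst p) \<Longrightarrow> G (SB p) = G p"
    and cd: "c differentiable (at (1/2, sqrt 3 / 2))"
    and c0: "c (1/2, sqrt 3 / 2) = (1/3, 1/3)"
  shows "((\<lambda>z. G (z, c z)) has_derivative (\<lambda>h. 0)) (at (1/2, sqrt 3 / 2))"
proof -
  obtain L where L: "(G has_derivative L) (at p0)" using Gd unfolding differentiable_def by blast
  have L0: "L = (\<lambda>h. 0)" by (rule sym_zero[OF L symA symB])
  obtain Dc where Dc: "(c has_derivative Dc) (at (1/2, sqrt 3 / 2))" using cd unfolding differentiable_def by blast
  have pd: "((\<lambda>z. (z, c z)) has_derivative (\<lambda>h. (h, Dc h))) (at (1/2, sqrt 3 / 2))"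
    by (rule has_derivative_Pair[OF has_derivative_ident Dc])
  have pz: "((1/2, sqrt 3 / 2), c (1/2, sqrt 3 / 2)) = p0" by (simp add: c0 p0_def)
  have "((G \<circ> (\<lambda>z. (z, c z))) has_derivative (L \<circ> (\<lambda>h. (h, Dc h)))) (at (1/2, sqrt 3 / 2))"
    by (rule diff_chain_at[OF pd]) (simp add: pz L)
  then show ?thesis by (simp add: L0 comp_def)
qed

theorem lemma4p2:
  fixes c :: "real \<times> real \<Rightarrow> real \<times> real" and U :: "(real \<times> real) set" and \<alpha> :: real
  assumes "open U"
    and "U \<subseteq> {(x, y). y > 0}"
    and "\<And>y. y > 0 \<Longrightarrow> (1/2, y) \<in> U"
    and "\<And>p. p \<in> U \<Longrightarrow> c differentiable (at p)"
    and "\<And>y. y > 0 \<Longrightarrow> c (1/2, y) = circ_a (1/2, y)"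
    and "\<And>x y. (x, y) \<in> U \<Longrightarrow> fst (c (x, y)) + x * snd (c (x, y)) = 1/2"
    and "\<And>y. y > 0 \<Longrightarrow> ((\<lambda>x. snd (c (x, y))) has_real_derivative 0) (at (1/2))"
    and "\<alpha> > 0"
  shows "((\<lambda>z. theta z (c z) \<alpha>) has_derivative (\<lambda>h. 0)) (at (1/2, sqrt 3 / 2))
       \<and> ((\<lambda>z. theta_hat z (c z) \<alpha>) has_derivative (\<lambda>h. 0)) (at (1/2, sqrt 3 / 2))"
proof -
  have y0: "(0::real) < sqrt 3 / 2" by simp
  have cd: "c differentiable (at (1/2, sqrt 3 / 2))" using assms(4)[OF assms(3)[OF y0]] .
  have c0: "c (1/2, sqrt 3 / 2) = (1/3, 1/3)" using assms(5)[OF y0] circ_a_p0 by simp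
  have a: "\<alpha> > 0" by (rule assms(8))
  have t: "((\<lambda>z. (\<Sum>\<^sub>\<infinity>n. tht \<alpha> n (z, c z))) has_derivative (\<lambda>h. 0)) (at (1/2, sqrt 3 / 2))"
    by (rule final_from_G[where G = "\<lambda>p. \<Sum>\<^sub>\<infinity>n. tht \<alpha> n p", OF G_theta_diff[OF a] _ _ cd c0])
       (simp_all add: sum_SA_theta sum_SB_theta)
  have th: "((\<lambda>z. (\<Sum>\<^sub>\<infinity>n. thh \<alpha> n (z, c z))) has_derivative (\<lambda>h. 0)) (at (1/2, sqrt 3 / 2))"
    by (rule final_from_G[where G = "\<lambda>p. \<Sum>\<^sub>\<infinity>n. thh \<alpha> n p", OF G_thetahat_diff[OF a] _ _ cd c0])
       (simp_all add: sum_SA_thetahat sum_SB_thetahat)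
  show ?thesis using t th by (simp add: theta_eq theta_hat_eq)
qed

end
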